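(* Let $p_{\boldsymbol\phi}$ be a smooth, decomposable, normalized PC (i.e. $\sum_{c\in\mathrm{ch}(n)}\theta_{n,c}=1$ for every sum node $n$), let $\mathcal D$ be a finite dataset with $p_{\boldsymbol\phi}(\mathbf x)>0$ for all $\mathbf x\in\mathcal D$, and let $\gamma>1$, $\alpha:=1/(\gamma-1)$. Then, among all normalized $\boldsymbol\phi'\in\mathbb R^E$ (i.e. $\sum_{c\in\mathrm{ch}(n)}\exp(\phi'_{n,c})=1$ for all sum nodes $n$), the objective $$\frac{1}{|\mathcal D|}\sum_{\mathbf x\in\mathcal D}\Big(\log p_{\boldsymbol\phi}(\mathbf x)+\Big\langle\frac{\partial\log p_{\boldsymbol\phi}(\mathbf x)}{\partial\boldsymbol\phi},\boldsymbol\phi'-\boldsymbol\phi\Big\rangle\Big)-\gamma\,\mathrm{KL}_{\boldsymbol\phi}(\boldsymbol\phi')$$ (equivalently $Q^{\mathcal D}_{\boldsymbol\phi}(\boldsymbol\phi')-(\gamma-1)\mathrm{KL}_{\boldsymbol\phi}(\boldsymbol\phi')$) has a unique maximizer, given for every sum edge $(n,c)$ by $$\theta'_{n,c}=\exp(\phi'_{n,c})=\frac{\mathrm{TD}(n)\,\theta_{n,c}+\alpha\,\mathrm F^{\mathcal D}_{\boldsymbol\phi}(n,c)}{\sum_{c'\in\mathrm{ch}(n)}\big(\mathrm{TD}(n)\,\theta_{n,c'}+\alpha\,\mathrm F^{\mathcal D}_{\boldsymbol\phi}(n,c')\big)}.$$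
   Context: Probabilistic circuits. Let $\mathbf X$ be a finite set of discrete random variables, each with a finite domain; $\mathbf x$ denotes a full assignment to $\mathbf X$. A probabilistic circuit (PC) is a finite directed acyclic graph with a unique root node $n_r$ (the only node without parents), each node of which is an input node (no children), a product node, or a sum node. $\mathrm{ch}(n)$ and $\mathrm{pa}(n)$ denote the children and parents of $n$. Every child of a sum node is a product node or an input node, and every child of a product node is a sum node or an input node. Each input node $n$ carries a fixed (parameter-free) probability distribution $f_n$ over a single variable of $\mathbf X$. Each edge $(n,c)$ with $n$ a sum node carries a real log-parameter $\phi_{n,c}$; write $\theta_{n,c}=\exp(\phi_{n,c})>0$ and $\boldsymbol\phi=(\phi_{n,c})\in\mathbb R^E$, where $E$ is the set of such edges. The scope of a node is the set of variables of its descendant input nodes. The PC is smooth if all children of each sum node have the same scope, and decomposable if the children of each product node have pairwise disjoint scopes; all PCs are assumed smooth and decomposable. Unnormalized node values are defined recursively: $\tilde p^n_{\boldsymbol\phi}(\mathbf x)=f_n(\mathbf x)$ for an input node, $\prod_{c\in\mathrm{ch}(n)}\tilde p^c_{\boldsymbol\phi}(\mathbf x)$ for a product node, $\sum_{c\in\mathrm{ch}(n)}\theta_{n,c}\tilde p^c_{\boldsymbol\phi}(\mathbf x)$ for a sum node; $\tilde p_{\boldsymbol\phi}:=\tilde p^{n_r}_{\boldsymbol\phi}$. Partition functions $Z_n(\boldsymbol\phi)$ are defined by the same recursion but with $Z_n(\boldsymbol\phi)=1$ at input nodes; $Z(\boldsymbol\phi):=Z_{n_r}(\boldsymbol\phi)$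 and $p_{\boldsymbol\phi}(\mathbf x):=\tilde p_{\boldsymbol\phi}(\mathbf x)/Z(\boldsymbol\phi)$. Derivatives with respect to $\boldsymbol\phi$ treat all $\phi_{n,c}$ as independent real variables. Latent-variable view. An induced tree $T$ is a subgraph containing $n_r$ such that for every sum node in $T$ exactly one of its children (with the connecting edge) is in $T$, for every product node in $T$ all its children (and edges) are in $T$, and every node of $T$ is reached from $n_r$ in this way. Let $\mathcal T$ be the set of induced trees. Define $\tilde p_{\boldsymbol\phi}(\mathbf x,T)=\prod_{(n,c)\in T,\ n\text{ sum}}\theta_{n,c}\cdot\prod_{n\in T\text{ input}}f_n(\mathbf x)$ and $p_{\boldsymbol\phi}(\mathbf x,T)=\tilde p_{\boldsymbol\phi}(\mathbf x,T)/Z(\boldsymbol\phi)$; this is a joint distribution with marginal $p_{\boldsymbol\phi}(\mathbf X)$. Let $p_{\boldsymbol\phi}(T\mid\mathbf x)=p_{\boldsymbol\phi}(\mathbf x,T)/p_{\boldsymbol\phi}(\mathbf x)$. Define $\mathrm{KL}_{\boldsymbol\phi}(\boldsymbol\phi'):=\sum_{\mathbf x,T}p_{\boldsymbol\phi}(\mathbf x,T)\log\frac{p_{\boldsymbol\phi}(\mathbf x,T)}{p_{\boldsymbol\phi'}(\mathbf x,T)}$. For a finite dataset (multiset) $\mathcal D$, $Q^{\mathcal D}_{\boldsymbol\phi}(\boldsymbol\phi'):=\frac1{|\mathcal D|}\sum_{\mathbf x\in\mathcal D}\sum_{T\in\mathcal T}p_{\boldsymbol\phi}(T\mid\mathbf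 x)\log p_{\boldsymbol\phi'}(\mathbf x,T)$. Top-down probabilities: $\mathrm{TD}(n_r)=1$; for a sum node $n\ne n_r$, $\mathrm{TD}(n)=\sum_{m\in\mathrm{pa}(n)}\mathrm{TD}(m)$; for a product node $n\neq n_r$, $\mathrm{TD}(n)=\sum_{m\in\mathrm{pa}(n)}\theta_{m,n}\mathrm{TD}(m)$. Flows: $\mathrm F^{\mathcal D}_{\boldsymbol\phi}(n,c):=\frac1{|\mathcal D|}\sum_{\mathbf x\in\mathcal D}\frac{\partial\log\tilde p_{\boldsymbol\phi}(\mathbf x)}{\partial\phi_{n,c}}$. *)

theory Defs
  imports "HOL-Analysis.Analysis" "HOL-Library.Multiset" "HOL-Library.FuncSet"
begin

datatype nkind = InputN | ProdN | SumN

text \<open>A circuit over node type 'n, variable type 'v and value type 'd.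
  ivar n / ifun n are the variable and the (fixed) distribution of an input node.\<close>
record ('n, 'v, 'd) pc =
  nodes :: "'n set"
  root :: 'n
  kind :: "'n \<Rightarrow> nkind"
  ch :: "'n \<Rightarrow> 'n set"
  ivar :: "'n \<Rightarrow> 'v"
  ifun :: "'n \<Rightarrow> 'd \<Rightarrow> real"

definition dag_rel :: "('n, 'v, 'd) pc \<Rightarrow> ('n \<times> 'n) set" where
  "dag_rel C = {(n, c). n \<in> nodes C \<and> c \<in> ch C n}"

definition parents :: "('n, 'v, 'd) pc \<Rightarrow> 'n \<Rightarrow> 'n set" where
  "parents C n = {m \<in> nodes C. n \<in> ch C m}"

definition scope :: "('n, 'v, 'd) pc \<Rightarrow> 'n \<Rightarrow> 'v set" where
  "scope C n = {ivar C m | m. (n, m) \<in> (dag_rel C)\<^sup>* \<and> kind C m = InputN}"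

definition wf_pc :: "'v set \<Rightarrow> ('v \<Rightarrow> 'd set) \<Rightarrow> ('n, 'v, 'd) pc \<Rightarrow> bool" where
  "wf_pc Vars Dom C \<longleftrightarrow>
     finite Vars \<and> (\<forall>v\<in>Vars. finite (Dom v)) \<and>
     finite (nodes C) \<and> root C \<in> nodes C \<and>
     (\<forall>n\<in>nodes C. ch C n \<subseteq> nodes C) \<and>
     acyclic (dag_rel C) \<and>
     (\<forall>n\<in>nodes C. parents C n = {} \<longleftrightarrow> n = root C) \<and>
     (\<forall>n\<in>nodes C. kind C n = InputN \<longleftrightarrow> ch C n = {}) \<and>
     (\<forall>n\<in>nodes C. kind C n = SumN \<longrightarrow> (\<forall>c\<in>ch C n. kind C c \<noteq> SumN)) \<and>
     (\<forall>n\<in>nodes C. kind C n = ProdN \<longrightarrow> (\<forall>c\<in>ch C n. kind C c \<noteq> ProdN)) \<and>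
     (\<forall>n\<in>nodes C. kind C n = InputN \<longrightarrow>
        ivar C n \<in> Vars \<and> (\<forall>d\<in>Dom (ivar C n). 0 \<le> ifun C n d) \<and>
        (\<Sum>d\<in>Dom (ivar C n). ifun C n d) = 1) \<and>
     scope C (root C) = Vars"

definition smooth :: "('n, 'v, 'd) pc \<Rightarrow> bool" where
  "smooth C \<longleftrightarrow> (\<forall>n\<in>nodes C. kind C n = SumN \<longrightarrow>
      (\<forall>c\<in>ch C n. \<forall>c'\<in>ch C n. scope C c = scope C c'))"

definition decomposable :: "('n, 'v, 'd) pc \<Rightarrow> bool" where
  "decomposable C \<longleftrightarrow> (\<forall>n\<in>nodes C. kind C n = ProdN \<longrightarrow>
      (\<forall>c\<in>ch C n. \<forall>c'\<in>ch C n. c \<noteq> c' \<longrightarrow> scope C c \<inter> scope C c' = {}))"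

text \<open>The sum edges E; parameters phi are functions on edges, only their values on E matter.\<close>
definition sum_edges :: "('n, 'v, 'd) pc \<Rightarrow> ('n \<times> 'n) set" where
  "sum_edges C = {(n, c). n \<in> nodes C \<and> kind C n = SumN \<and> c \<in> ch C n}"

definition normalized :: "('n, 'v, 'd) pc \<Rightarrow> ('n \<times> 'n \<Rightarrow> real) \<Rightarrow> bool" where
  "normalized C \<phi> \<longleftrightarrow> (\<forall>n\<in>nodes C. kind C n = SumN \<longrightarrow> (\<Sum>c\<in>ch C n. exp (\<phi> (n, c))) = 1)"

definition eval_rec :: "'n set \<Rightarrow> ('n \<Rightarrow> ('n \<Rightarrow> real) \<Rightarrow> real) \<Rightarrow> 'n \<Rightarrow> real" where
  "eval_rec N F = (THE g. (\<forall>n\<in>N. g n = F n g) \<and> (\<forall>n. n \<notin> N \<longrightarrow> g n = 0))"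

definition ptilde_node :: "('n, 'v, 'd) pc \<Rightarrow> ('n \<times> 'n \<Rightarrow> real) \<Rightarrow> ('v \<Rightarrow> 'd) \<Rightarrow> 'n \<Rightarrow> real" where
  "ptilde_node C \<phi> x = eval_rec (nodes C) (\<lambda>n g. case kind C n of
      InputN \<Rightarrow> ifun C n (x (ivar C n))
    | ProdN \<Rightarrow> (\<Prod>c\<in>ch C n. g c)
    | SumN \<Rightarrow> (\<Sum>c\<in>ch C n. exp (\<phi> (n, c)) * g c))"

definition ptilde :: "('n, 'v, 'd) pc \<Rightarrow> ('n \<times> 'n \<Rightarrow> real) \<Rightarrow> ('v \<Rightarrow> 'd) \<Rightarrow> real" where
  "ptilde C \<phi> x = ptilde_node C \<phi> x (root C)"

definition Z_node :: "('n, 'v, 'd) pc \<Rightarrow> ('n \<times> 'n \<Rightarrow> real) \<Rightarrow> 'n \<Rightarrow> real" where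
  "Z_node C \<phi> = eval_rec (nodes C) (\<lambda>n g. case kind C n of
      InputN \<Rightarrow> 1
    | ProdN \<Rightarrow> (\<Prod>c\<in>ch C n. g c)
    | SumN \<Rightarrow> (\<Sum>c\<in>ch C n. exp (\<phi> (n, c)) * g c))"

definition Zpc :: "('n, 'v, 'd) pc \<Rightarrow> ('n \<times> 'n \<Rightarrow> real) \<Rightarrow> real" where
  "Zpc C \<phi> = Z_node C \<phi> (root C)"

definition pc_prob :: "('n, 'v, 'd) pc \<Rightarrow> ('n \<times> 'n \<Rightarrow> real) \<Rightarrow> ('v \<Rightarrow> 'd) \<Rightarrow> real" where
  "pc_prob C \<phi> x = ptilde C \<phi> x / Zpc C \<phi>"

definition induced_trees :: "('n, 'v, 'd) pc \<Rightarrow> ('n set \<times> ('n \<times> 'n) set) set" where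
  "induced_trees C = {(TN, TE). TN \<subseteq> nodes C \<and> TE \<subseteq> dag_rel C \<and> root C \<in> TN \<and>
      (\<forall>(n, c)\<in>TE. n \<in> TN \<and> c \<in> TN) \<and>
      (\<forall>n\<in>TN. kind C n = SumN \<longrightarrow> (\<exists>!c. (n, c) \<in> TE)) \<and>
      (\<forall>n\<in>TN. kind C n = ProdN \<longrightarrow> (\<forall>c\<in>ch C n. (n, c) \<in> TE)) \<and>
      (\<forall>m\<in>TN. (root C, m) \<in> TE\<^sup>*)}"

definition joint_tilde :: "('n, 'v, 'd) pc \<Rightarrow> ('n \<times> 'n \<Rightarrow> real) \<Rightarrow> ('v \<Rightarrow> 'd)
    \<Rightarrow> 'n set \<times> ('n \<times> 'n) set \<Rightarrow> real" where
  "joint_tilde C \<phi> x T =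
     (\<Prod>e\<in>{e \<in> snd T. kind C (fst e) = SumN}. exp (\<phi> e)) *
     (\<Prod>n\<in>{n \<in> fst T. kind C n = InputN}. ifun C n (x (ivar C n)))"

definition joint :: "('n, 'v, 'd) pc \<Rightarrow> ('n \<times> 'n \<Rightarrow> real) \<Rightarrow> ('v \<Rightarrow> 'd)
    \<Rightarrow> 'n set \<times> ('n \<times> 'n) set \<Rightarrow> real" where
  "joint C \<phi> x T = joint_tilde C \<phi> x T / Zpc C \<phi>"

definition KL :: "'v set \<Rightarrow> ('v \<Rightarrow> 'd set) \<Rightarrow> ('n, 'v, 'd) pc
    \<Rightarrow> ('n \<times> 'n \<Rightarrow> real) \<Rightarrow> ('n \<times> 'n \<Rightarrow> real) \<Rightarrow> real" where
  "KL Vars Dom C \<phi> \<phi>' = (\<Sum>x\<in>PiE Vars Dom. \<Sum>T\<in>induced_trees C.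
      joint C \<phi> x T * ln (joint C \<phi> x T / joint C \<phi>' x T))"

text \<open>TD for input nodes is not used (set to 0).\<close>
definition TD :: "('n, 'v, 'd) pc \<Rightarrow> ('n \<times> 'n \<Rightarrow> real) \<Rightarrow> 'n \<Rightarrow> real" where
  "TD C \<phi> = eval_rec (nodes C) (\<lambda>n g. if n = root C then 1 else (case kind C n of
      SumN \<Rightarrow> (\<Sum>m\<in>parents C n. g m)
    | ProdN \<Rightarrow> (\<Sum>m\<in>parents C n. exp (\<phi> (m, n)) * g m)
    | InputN \<Rightarrow> 0))"

text \<open>Partial derivative with respect to the coordinate e, all coordinates independent.\<close>
definition pderiv_at :: "(('e \<Rightarrow> real) \<Rightarrow> real) \<Rightarrow> ('e \<Rightarrow> real) \<Rightarrow> 'e \<Rightarrow> real" where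
  "pderiv_at f \<phi> e = deriv (\<lambda>t. f (\<phi>(e := t))) (\<phi> e)"

definition flow :: "('n, 'v, 'd) pc \<Rightarrow> ('v \<Rightarrow> 'd) multiset \<Rightarrow> ('n \<times> 'n \<Rightarrow> real) \<Rightarrow> 'n \<times> 'n \<Rightarrow> real" where
  "flow C D \<phi> e = (1 / real (size D)) * (\<Sum>x\<in>#D. pderiv_at (\<lambda>\<psi>. ln (ptilde C \<psi> x)) \<phi> e)"

definition objective :: "'v set \<Rightarrow> ('v \<Rightarrow> 'd set) \<Rightarrow> ('n, 'v, 'd) pc \<Rightarrow> ('v \<Rightarrow> 'd) multiset
    \<Rightarrow> real \<Rightarrow> ('n \<times> 'n \<Rightarrow> real) \<Rightarrow> ('n \<times> 'n \<Rightarrow> real) \<Rightarrow> real" where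
  "objective Vars Dom C D \<gamma> \<phi> \<phi>' =
     (1 / real (size D)) * (\<Sum>x\<in>#D. ln (pc_prob C \<phi> x) +
        (\<Sum>e\<in>sum_edges C. pderiv_at (\<lambda>\<psi>. ln (pc_prob C \<psi> x)) \<phi> e * (\<phi>' e - \<phi> e)))
     - \<gamma> * KL Vars Dom C \<phi> \<phi>'"

end

theory Submission
  imports Defs
begin

lemma eval_rec_prop:
  assumes wfR: "wf R"
    and loc: "\<And>n g g'. n \<in> N \<Longrightarrow> (\<And>m. (m, n) \<in> R \<Longrightarrow> g m = g' m) \<Longrightarrow> F n g = F n g'"
  shows "(\<forall>n\<in>N. eval_rec N F n = F n (eval_rec N F)) \<and> (\<forall>n. n \<notin> N \<longrightarrow> eval_rec N F n = 0)"
proof -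
  let ?P = "\<lambda>g. (\<forall>n\<in>N. g n = F n g) \<and> (\<forall>n. n \<notin> N \<longrightarrow> g n = 0)"
  define G where "G = (\<lambda>g n. if n \<in> N then F n g else (0::real))"
  have adm: "adm_wf R G"
  proof (unfold adm_wf_def, intro allI impI)
    fix f g :: "_ \<Rightarrow> real" and x assume h: "\<forall>z. (z, x) \<in> R \<longrightarrow> f z = g z"
    show "G f x = G g x"
    proof (cases "x \<in> N")
      case True
      have "F x f = F x g" by (rule loc[OF True]) (use h in blast)
      then show ?thesis unfolding G_def by simp
    qed (simp add: G_def)
  qed
  have fixp: "wfrec R G = G (wfrec R G)" using wfrec_fixpoint[OF wfR adm] .
  have ex: "?P (wfrec R G)"
  proof -
    have "\<And>n. wfrec R G n = G (wfrec R G) n" using fixp by metis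
    then show ?thesis unfolding G_def by simp
  qed
  have uniq: "g1 = g2" if h1: "?P g1" and h2: "?P g2" for g1 g2
  proof
    fix n show "g1 n = g2 n"
      using wfR
    proof (induction n rule: wf_induct_rule)
      case (less n)
      show ?case
      proof (cases "n \<in> N")
        case True
        have "F n g1 = F n g2" by (rule loc[OF True]) (rule less.IH)
        then show ?thesis using True h1 h2 by simp
      next
        case False then show ?thesis using h1 h2 by simp
      qed
    qed
  qed
  have "?P (eval_rec N F)"
    unfolding eval_rec_def
    by (rule theI[of ?P, OF ex]) (rule uniq, assumption, rule ex)
  then show ?thesis .
qed
definition cval :: "('n, 'v, 'd) pc \<Rightarrow> ('n \<times> 'n \<Rightarrow> real) \<Rightarrow> ('n \<Rightarrow> real) \<Rightarrow> 'n \<Rightarrow> real" where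
  "cval C \<psi> h = eval_rec (nodes C) (\<lambda>n g. case kind C n of
      InputN \<Rightarrow> h n
    | ProdN \<Rightarrow> (\<Prod>c\<in>ch C n. g c)
    | SumN \<Rightarrow> (\<Sum>c\<in>ch C n. exp (\<psi> (n, c)) * g c))"

lemma ptilde_node_cval: "ptilde_node C \<psi> x = cval C \<psi> (\<lambda>n. ifun C n (x (ivar C n)))"
  unfolding ptilde_node_def cval_def by simp

lemma Z_node_cval: "Z_node C \<psi> = cval C \<psi> (\<lambda>_. 1)"
  unfolding Z_node_def cval_def by simp

definition desc :: "('n, 'v, 'd) pc \<Rightarrow> 'n \<Rightarrow> 'n set" where
  "desc C c = {m. (c, m) \<in> (dag_rel C)\<^sup>*}"

locale pcw =
  fixes Vars :: "'v set" and Dom :: "'v \<Rightarrow> 'd set" and C :: "('n, 'v, 'd) pc"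
  assumes wfpc: "wf_pc Vars Dom C" and smooth: "smooth C" and decomp: "decomposable C"
begin

lemma fin_nodes: "finite (nodes C)" using wfpc by (simp add: wf_pc_def)
lemma root_in: "root C \<in> nodes C" using wfpc by (simp add: wf_pc_def)
lemma ch_sub: "n \<in> nodes C \<Longrightarrow> ch C n \<subseteq> nodes C" using wfpc by (simp add: wf_pc_def)
lemma acyc: "acyclic (dag_rel C)" using wfpc by (simp add: wf_pc_def)
lemma parents_iff: "n \<in> nodes C \<Longrightarrow> parents C n = {} \<longleftrightarrow> n = root C"
  using wfpc by (simp add: wf_pc_def)
lemma input_iff: "n \<in> nodes C \<Longrightarrow> kind C n = InputN \<longleftrightarrow> ch C n = {}"
  using wfpc by (simp add: wf_pc_def)
lemma sum_ch: "n \<in> nodes C \<Longrightarrow> kind C n = SumN \<Longrightarrow> c \<in> ch C n \<Longrightarrow> kind C c \<noteq> SumN"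
  using wfpc by (simp add: wf_pc_def)
lemma prod_ch: "n \<in> nodes C \<Longrightarrow> kind C n = ProdN \<Longrightarrow> c \<in> ch C n \<Longrightarrow> kind C c \<noteq> ProdN"
  using wfpc by (simp add: wf_pc_def)
lemma input_prop: "n \<in> nodes C \<Longrightarrow> kind C n = InputN \<Longrightarrow> ivar C n \<in> Vars \<and>
   (\<forall>d\<in>Dom (ivar C n). 0 \<le> ifun C n d) \<and> (\<Sum>d\<in>Dom (ivar C n). ifun C n d) = 1"
  using wfpc by (simp add: wf_pc_def)
lemma scope_root: "scope C (root C) = Vars" using wfpc by (simp add: wf_pc_def)
lemma fin_Vars: "finite Vars" using wfpc by (simp add: wf_pc_def)
lemma fin_Dom: "v \<in> Vars \<Longrightarrow> finite (Dom v)" using wfpc by (simp add: wf_pc_def)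

lemma dag_iff[simp]: "(n, c) \<in> dag_rel C \<longleftrightarrow> n \<in> nodes C \<and> c \<in> ch C n"
  by (simp add: dag_rel_def)
lemma dag_sub: "dag_rel C \<subseteq> nodes C \<times> nodes C"
  using ch_sub by (auto simp: dag_rel_def)
lemma fin_dag: "finite (dag_rel C)"
  using dag_sub fin_nodes finite_subset by blast
lemma wf_conv: "wf ((dag_rel C)\<inverse>)"
  using finite_acyclic_wf_converse[OF fin_dag acyc] .
lemma wf_dag: "wf (dag_rel C)"
  using finite_acyclic_wf[OF fin_dag acyc] .
lemma fin_ch: "n \<in> nodes C \<Longrightarrow> finite (ch C n)"
  using ch_sub fin_nodes finite_subset by blast

lemma cval_rec: "n \<in> nodes C \<Longrightarrow> cval C \<psi> h n = (case kind C n of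
      InputN \<Rightarrow> h n
    | ProdN \<Rightarrow> (\<Prod>c\<in>ch C n. cval C \<psi> h c)
    | SumN \<Rightarrow> (\<Sum>c\<in>ch C n. exp (\<psi> (n, c)) * cval C \<psi> h c))"
proof -
  let ?F = "(\<lambda>n g. case kind C n of
      InputN \<Rightarrow> h n
    | ProdN \<Rightarrow> (\<Prod>c\<in>ch C n. g c)
    | SumN \<Rightarrow> (\<Sum>c\<in>ch C n. exp (\<psi> (n, c)) * g c))"
  have "(\<forall>n\<in>nodes C. eval_rec (nodes C) ?F n = ?F n (eval_rec (nodes C) ?F))"
  proof (rule conjunct1[OF eval_rec_prop[OF wf_conv]])
    fix n and g g' :: "'n \<Rightarrow> real"
    assume n: "n \<in> nodes C" and h: "\<And>m. (m, n) \<in> (dag_rel C)\<inverse> \<Longrightarrow> g m = g' m"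
    have hc: "\<And>c. c \<in> ch C n \<Longrightarrow> g c = g' c" using h n by simp
    have e1: "(\<Prod>c\<in>ch C n. g c) = (\<Prod>c\<in>ch C n. g' c)" by (rule prod.cong[OF refl hc])
    have e2: "(\<Sum>c\<in>ch C n. exp (\<psi> (n, c)) * g c) = (\<Sum>c\<in>ch C n. exp (\<psi> (n, c)) * g' c)"
      by (rule sum.cong) (simp_all add: hc)
    show "?F n g = ?F n g'" using e1 e2 by (simp split: nkind.split)
  qed
  moreover assume "n \<in> nodes C"
  ultimately show ?thesis unfolding cval_def by blast
qed

lemma TD_rec: "n \<in> nodes C \<Longrightarrow> TD C \<phi> n = (if n = root C then 1 else (case kind C n of
      SumN \<Rightarrow> (\<Sum>m\<in>parents C n. TD C \<phi> m)
    | ProdN \<Rightarrow> (\<Sum>m\<in>parents C n. exp (\<phi> (m, n)) * TD C \<phi> m)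
    | InputN \<Rightarrow> 0))"
proof -
  let ?F = "(\<lambda>n g. if n = root C then 1 else (case kind C n of
      SumN \<Rightarrow> (\<Sum>m\<in>parents C n. g m)
    | ProdN \<Rightarrow> (\<Sum>m\<in>parents C n. exp (\<phi> (m, n)) * g m)
    | InputN \<Rightarrow> 0))"
  have "(\<forall>n\<in>nodes C. eval_rec (nodes C) ?F n = ?F n (eval_rec (nodes C) ?F))"
  proof (rule conjunct1[OF eval_rec_prop[OF wf_dag]])
    fix n and g g' :: "'n \<Rightarrow> real"
    assume n: "n \<in> nodes C" and h: "\<And>m. (m, n) \<in> dag_rel C \<Longrightarrow> g m = g' m"
    have hc: "\<And>m. m \<in> parents C n \<Longrightarrow> g m = g' m" using h by (simp add: parents_def)
    have e1: "(\<Sum>m\<in>parents C n. g m) = (\<Sum>m\<in>parents C n. g' m)" by (rule sum.cong[OF refl hc])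
    have e2: "(\<Sum>m\<in>parents C n. exp (\<phi> (m, n)) * g m) = (\<Sum>m\<in>parents C n. exp (\<phi> (m, n)) * g' m)"
      by (rule sum.cong) (simp_all add: hc)
    show "?F n g = ?F n g'" using e1 e2 by (simp split: nkind.split)
  qed
  moreover assume "n \<in> nodes C"
  ultimately show ?thesis unfolding TD_def by blast
qed

lemma Z_one: "normalized C \<psi> \<Longrightarrow> n \<in> nodes C \<Longrightarrow> Z_node C \<psi> n = 1"
proof (induction n rule: wf_induct_rule[OF wf_conv])
  case (1 n)
  have IH: "c \<in> ch C n \<Longrightarrow> Z_node C \<psi> c = 1" for c
    using 1 ch_sub by auto
  show ?case
    using 1(2,3) IH unfolding Z_node_cval
    by (auto simp: cval_rec normalized_def split: nkind.split)
qed

lemma TD_pos: "n \<in> nodes C \<Longrightarrow> kind C n \<noteq> InputN \<Longrightarrow> TD C \<phi> n > 0"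
proof (induction n rule: wf_induct_rule[OF wf_dag])
  case (1 n)
  show ?case
  proof (cases "n = root C")
    case True then show ?thesis using 1 by (simp add: TD_rec)
  next
    case False
    then have ne: "parents C n \<noteq> {}" using parents_iff 1 by blast
    have fin: "finite (parents C n)" using fin_nodes by (simp add: parents_def)
    have pos: "TD C \<phi> m > 0" if "m \<in> parents C n" for m
    proof -
      have "m \<in> nodes C" "n \<in> ch C m" using that by (auto simp: parents_def)
      then have "kind C m \<noteq> InputN" using input_iff by blast
      then show ?thesis using 1 \<open>m \<in> nodes C\<close> \<open>n \<in> ch C m\<close> by auto
    qed
    show ?thesis
      using 1(2,3) False ne fin pos
      by (auto simp: TD_rec split: nkind.split intro!: sum_pos)
  qed
qed

lemma rtrancl_step_iff: "(a, b) \<in> r\<^sup>* \<longleftrightarrow> a = b \<or> (\<exists>c. (a, c) \<in> r \<and> (c, b) \<in> r\<^sup>*)"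
  by (metis converse_rtranclE converse_rtrancl_into_rtrancl rtrancl.rtrancl_refl)

lemma scope_unfold: "n \<in> nodes C \<Longrightarrow>
   scope C n = (if kind C n = InputN then {ivar C n} else (\<Union>c\<in>ch C n. scope C c))"
proof -
  assume n: "n \<in> nodes C"
  have "scope C n = {ivar C m |m. (n = m \<or> (\<exists>c. (n, c) \<in> dag_rel C \<and> (c, m) \<in> (dag_rel C)\<^sup>*))
       \<and> kind C m = InputN}"
    unfolding scope_def by (subst rtrancl_step_iff) (rule refl)
  also have "\<dots> = (if kind C n = InputN then {ivar C n} else (\<Union>c\<in>ch C n. scope C c))"
    using n input_iff[OF n] by (auto simp: scope_def)
  finally show ?thesis .
qed

lemma desc_nodes: "(c, m) \<in> (dag_rel C)\<^sup>* \<Longrightarrow> c \<in> nodes C \<Longrightarrow> m \<in> nodes C"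
  by (induction rule: rtrancl_induct) (auto intro: ch_sub[THEN subsetD])

lemma scope_nonempty: "n \<in> nodes C \<Longrightarrow> scope C n \<noteq> {}"
proof (induction n rule: wf_induct_rule[OF wf_conv])
  case (1 n)
  show ?case
  proof (cases "kind C n = InputN")
    case True then show ?thesis using 1 by (simp add: scope_unfold)
  next
    case False
    then obtain c where c: "c \<in> ch C n" using input_iff 1 by blast
    then have "scope C c \<noteq> {}" using 1 ch_sub by auto
    then show ?thesis using False c 1 by (auto simp: scope_unfold)
  qed
qed

lemma desc_scope: "(c, m) \<in> (dag_rel C)\<^sup>* \<Longrightarrow> scope C m \<subseteq> scope C c"
proof
  fix v assume cm: "(c, m) \<in> (dag_rel C)\<^sup>*" and "v \<in> scope C m"
  then obtain m' where "v = ivar C m'" "(m, m') \<in> (dag_rel C)\<^sup>*" "kind C m' = InputN"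
    unfolding scope_def by blast
  moreover have "(c, m') \<in> (dag_rel C)\<^sup>*" using cm calculation(2) by (rule rtrancl_trans)
  ultimately show "v \<in> scope C c" unfolding scope_def by blast
qed

lemma smooth_scope: "n \<in> nodes C \<Longrightarrow> kind C n = SumN \<Longrightarrow> c \<in> ch C n \<Longrightarrow> scope C n = scope C c"
proof -
  assume n: "n \<in> nodes C" and k: "kind C n = SumN" and c: "c \<in> ch C n"
  have all: "\<forall>c'\<in>ch C n. scope C c' = scope C c" using smooth n k c unfolding smooth_def by blast
  have "scope C n = (\<Union>c'\<in>ch C n. scope C c')" using scope_unfold[OF n] k by simp
  also have "\<dots> = scope C c" using all c by blast
  finally show ?thesis .
qed

lemma decomp_disj: "n \<in> nodes C \<Longrightarrow> kind C n = ProdN \<Longrightarrow> c \<in> ch C n \<Longrightarrow> c' \<in> ch C n \<Longrightarrow>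
   c \<noteq> c' \<Longrightarrow> scope C c \<inter> scope C c' = {}"
  using decomp unfolding decomposable_def by blast

lemma desc_unique: "n \<in> nodes C \<Longrightarrow> kind C n = ProdN \<Longrightarrow> c \<in> ch C n \<Longrightarrow> c' \<in> ch C n \<Longrightarrow>
   (c, m) \<in> (dag_rel C)\<^sup>* \<Longrightarrow> (c', m) \<in> (dag_rel C)\<^sup>* \<Longrightarrow> c = c'"
proof (rule ccontr)
  assume a: "n \<in> nodes C" "kind C n = ProdN" "c \<in> ch C n" "c' \<in> ch C n"
    "(c, m) \<in> (dag_rel C)\<^sup>*" "(c', m) \<in> (dag_rel C)\<^sup>*" "c \<noteq> c'"
  have "m \<in> nodes C" using a ch_sub desc_nodes by blast
  then have "scope C m \<noteq> {}" by (rule scope_nonempty)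
  moreover have "scope C m \<subseteq> scope C c \<inter> scope C c'" using a desc_scope by blast
  ultimately show False using decomp_disj[OF a(1-4,7)] by blast
qed

lemma not_back: "(r, c) \<in> dag_rel C \<Longrightarrow> (c, r) \<notin> (dag_rel C)\<^sup>*"
proof
  assume "(r, c) \<in> dag_rel C" "(c, r) \<in> (dag_rel C)\<^sup>*"
  then have "(r, r) \<in> (dag_rel C)\<^sup>+" by (rule rtrancl_into_trancl2)
  then show False using acyc unfolding acyclic_def by blast
qed

end


definition trees_at :: "('n, 'v, 'd) pc \<Rightarrow> 'n \<Rightarrow> ('n set \<times> ('n \<times> 'n) set) set" where
  "trees_at C r = {(TN, TE). TN \<subseteq> nodes C \<and> TE \<subseteq> dag_rel C \<and> r \<in> TN \<and>
      (\<forall>(n, c)\<in>TE. n \<in> TN \<and> c \<in> TN) \<and>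
      (\<forall>n\<in>TN. kind C n = SumN \<longrightarrow> (\<exists>!c. (n, c) \<in> TE)) \<and>
      (\<forall>n\<in>TN. kind C n = ProdN \<longrightarrow> (\<forall>c\<in>ch C n. (n, c) \<in> TE)) \<and>
      (\<forall>m\<in>TN. (r, m) \<in> TE\<^sup>*)}"

lemma induced_trees_at: "induced_trees C = trees_at C (root C)"
  unfolding induced_trees_def trees_at_def by simp

definition ET :: "('n, 'v, 'd) pc \<Rightarrow> 'n set \<times> ('n \<times> 'n) set \<Rightarrow> ('n \<times> 'n) set" where
  "ET C T = {e \<in> snd T. kind C (fst e) = SumN}"
definition INs :: "('n, 'v, 'd) pc \<Rightarrow> 'n set \<times> ('n \<times> 'n) set \<Rightarrow> 'n set" where
  "INs C T = {n \<in> fst T. kind C n = InputN}"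
definition tw :: "('n, 'v, 'd) pc \<Rightarrow> ('n \<times> 'n \<Rightarrow> real) \<Rightarrow> ('n \<Rightarrow> real) \<Rightarrow> 'n set \<times> ('n \<times> 'n) set \<Rightarrow> real" where
  "tw C \<psi> h T = (\<Prod>e\<in>ET C T. exp (\<psi> e)) * (\<Prod>n\<in>INs C T. h n)"

lemma joint_tilde_tw: "joint_tilde C \<psi> x T = tw C \<psi> (\<lambda>n. ifun C n (x (ivar C n))) T"
  unfolding joint_tilde_def tw_def ET_def INs_def by simp

definition sext :: "'n \<Rightarrow> 'n \<times> ('n set \<times> ('n \<times> 'n) set) \<Rightarrow> 'n set \<times> ('n \<times> 'n) set" where
  "sext r p = (insert r (fst (snd p)), insert (r, fst p) (snd (snd p)))"
definition pext :: "('n, 'v, 'd) pc \<Rightarrow> 'n \<Rightarrow> ('n \<Rightarrow> 'n set \<times> ('n \<times> 'n) set) \<Rightarrow> 'n set \<times> ('n \<times> 'n) set" where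
  "pext C r \<sigma> = (insert r (\<Union>c\<in>ch C r. fst (\<sigma> c)), Pair r ` ch C r \<union> (\<Union>c\<in>ch C r. snd (\<sigma> c)))"
definition restr :: "('n, 'v, 'd) pc \<Rightarrow> 'n \<Rightarrow> 'n set \<times> ('n \<times> 'n) set \<Rightarrow> 'n set \<times> ('n \<times> 'n) set" where
  "restr C c T = (fst T \<inter> desc C c, {e \<in> snd T. fst e \<in> desc C c})"

context pcw begin

lemma trees_at_iff: "(TN, TE) \<in> trees_at C r \<longleftrightarrow> TN \<subseteq> nodes C \<and> TE \<subseteq> dag_rel C \<and> r \<in> TN \<and>
      (\<forall>a b. (a, b) \<in> TE \<longrightarrow> a \<in> TN \<and> b \<in> TN) \<and>
      (\<forall>n\<in>TN. kind C n = SumN \<longrightarrow> (\<exists>!c. (n, c) \<in> TE)) \<and>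
      (\<forall>n\<in>TN. kind C n = ProdN \<longrightarrow> (\<forall>c\<in>ch C n. (n, c) \<in> TE)) \<and>
      (\<forall>m\<in>TN. (r, m) \<in> TE\<^sup>*)"
  unfolding trees_at_def by (simp add: Ball_def)

lemma trees_atD:
  assumes "(TN, TE) \<in> trees_at C r"
  shows "TN \<subseteq> nodes C" "TE \<subseteq> dag_rel C" "r \<in> TN" "\<And>a b. (a, b) \<in> TE \<Longrightarrow> a \<in> TN \<and> b \<in> TN"
    "\<And>n. n \<in> TN \<Longrightarrow> kind C n = SumN \<Longrightarrow> \<exists>!c. (n, c) \<in> TE"
    "\<And>n c. n \<in> TN \<Longrightarrow> kind C n = ProdN \<Longrightarrow> c \<in> ch C n \<Longrightarrow> (n, c) \<in> TE"
    "\<And>m. m \<in> TN \<Longrightarrow> (r, m) \<in> TE\<^sup>*"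
proof -
  note H = assms[unfolded trees_at_iff]
  show "TN \<subseteq> nodes C" using H by (elim conjE) assumption
  show "TE \<subseteq> dag_rel C" using H by (elim conjE) assumption
  show "r \<in> TN" using H by (elim conjE) assumption
  have H4: "\<forall>a b. (a, b) \<in> TE \<longrightarrow> a \<in> TN \<and> b \<in> TN" using H by (elim conjE) assumption
  have H5: "\<forall>n\<in>TN. kind C n = SumN \<longrightarrow> (\<exists>!c. (n, c) \<in> TE)" using H by (elim conjE) assumption
  have H6: "\<forall>n\<in>TN. kind C n = ProdN \<longrightarrow> (\<forall>c\<in>ch C n. (n, c) \<in> TE)" using H by (elim conjE) assumption
  have H7: "\<forall>m\<in>TN. (r, m) \<in> TE\<^sup>*" using H by (elim conjE) assumption
  show "\<And>a b. (a, b) \<in> TE \<Longrightarrow> a \<in> TN \<and> b \<in> TN" using H4 by blast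
  show "\<And>n. n \<in> TN \<Longrightarrow> kind C n = SumN \<Longrightarrow> \<exists>!c. (n, c) \<in> TE"
    using H5 by (intro mp[OF bspec[OF H5]])
  show "\<And>n c. n \<in> TN \<Longrightarrow> kind C n = ProdN \<Longrightarrow> c \<in> ch C n \<Longrightarrow> (n, c) \<in> TE" using H6 by blast
  show "\<And>m. m \<in> TN \<Longrightarrow> (r, m) \<in> TE\<^sup>*" using H7 by blast
qed

lemma trees_atI:
  assumes "TN \<subseteq> nodes C" "TE \<subseteq> dag_rel C" "r \<in> TN" "\<And>a b. (a, b) \<in> TE \<Longrightarrow> a \<in> TN \<and> b \<in> TN"
    "\<And>n. n \<in> TN \<Longrightarrow> kind C n = SumN \<Longrightarrow> \<exists>!c. (n, c) \<in> TE"
    "\<And>n c. n \<in> TN \<Longrightarrow> kind C n = ProdN \<Longrightarrow> c \<in> ch C n \<Longrightarrow> (n, c) \<in> TE"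
    "\<And>m. m \<in> TN \<Longrightarrow> (r, m) \<in> TE\<^sup>*"
  shows "(TN, TE) \<in> trees_at C r"
  unfolding trees_at_iff
  unfolding trees_at_iff
proof (intro conjI)
  show "\<forall>a b. (a, b) \<in> TE \<longrightarrow> a \<in> TN \<and> b \<in> TN" using assms(4) by blast
  show "\<forall>n\<in>TN. kind C n = SumN \<longrightarrow> (\<exists>!c. (n, c) \<in> TE)" using assms(5) by (intro ballI impI)
  show "\<forall>n\<in>TN. kind C n = ProdN \<longrightarrow> (\<forall>c\<in>ch C n. (n, c) \<in> TE)" using assms(6) by blast
  show "\<forall>m\<in>TN. (r, m) \<in> TE\<^sup>*" using assms(7) by blast
qed (rule assms)+

lemma tree_desc: "(TN, TE) \<in> trees_at C r \<Longrightarrow> m \<in> TN \<Longrightarrow> (r, m) \<in> (dag_rel C)\<^sup>*"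
proof -
  assume T: "(TN, TE) \<in> trees_at C r" and m: "m \<in> TN"
  have "(r, m) \<in> TE\<^sup>*" by (rule trees_atD(7)[OF T m])
  then show ?thesis by (rule rtrancl_mono[OF trees_atD(2)[OF T], THEN subsetD])
qed

lemma tree_fin: "finite (trees_at C r)"
proof -
  have "trees_at C r \<subseteq> Pow (nodes C) \<times> Pow (dag_rel C)"
  proof
    fix T assume T: "T \<in> trees_at C r"
    obtain TN TE where TT: "T = (TN, TE)" by (cases T)
    have "TN \<subseteq> nodes C" "TE \<subseteq> dag_rel C" using trees_atD(1,2) T TT by blast+
    then show "T \<in> Pow (nodes C) \<times> Pow (dag_rel C)" using TT by simp
  qed
  moreover have "finite (Pow (nodes C) \<times> Pow (dag_rel C))" using fin_nodes fin_dag by simp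
  ultimately show ?thesis by (rule finite_subset)
qed

lemma tree_fin_edges: "T \<in> trees_at C r \<Longrightarrow> finite (snd T)"
proof -
  assume T: "T \<in> trees_at C r"
  obtain TN TE where TT: "T = (TN, TE)" by (cases T)
  have "TE \<subseteq> dag_rel C" using trees_atD(2) T TT by blast
  then show ?thesis using TT finite_subset fin_dag by auto
qed

lemma tree_fin_nodes: "T \<in> trees_at C r \<Longrightarrow> finite (fst T)"
proof -
  assume T: "T \<in> trees_at C r"
  obtain TN TE where TT: "T = (TN, TE)" by (cases T)
  have "TN \<subseteq> nodes C" using trees_atD(1) T TT by blast
  then show ?thesis using TT finite_subset fin_nodes by auto
qed

lemma tree_first: "(TN, TE) \<in> trees_at C r \<Longrightarrow> m \<in> TN \<Longrightarrow> m \<noteq> r \<Longrightarrow> \<exists>c. (r, c) \<in> TE \<and> (c, m) \<in> TE\<^sup>*"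
proof -
  assume T: "(TN, TE) \<in> trees_at C r" and m: "m \<in> TN" and ne: "m \<noteq> r"
  have "(r, m) \<in> TE\<^sup>*" by (rule trees_atD(7)[OF T m])
  then show ?thesis
  proof (rule converse_rtranclE)
    assume "r = m" then show ?thesis using ne by simp
  next
    fix y assume "(r, y) \<in> TE" "(y, m) \<in> TE\<^sup>*" then show ?thesis by blast
  qed
qed

lemma restr_path:
  assumes sub: "TE \<subseteq> dag_rel C" and p: "(c, m) \<in> TE\<^sup>*"
  shows "(c, m) \<in> {e \<in> TE. fst e \<in> desc C c}\<^sup>*"
  using p
proof (induction rule: rtrancl_induct)
  case base then show ?case by simp
next
  case (step y z)
  have "{e \<in> TE. fst e \<in> desc C c} \<subseteq> dag_rel C" using sub by blast
  then have "(c, y) \<in> (dag_rel C)\<^sup>*" using step.IH rtrancl_mono by blast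
  then have "(y, z) \<in> {e \<in> TE. fst e \<in> desc C c}" using step.hyps(2) by (simp add: desc_def)
  then show ?case using step.IH by (rule rtrancl_into_rtrancl[rotated])
qed

lemma restr_tree:
  assumes T: "(TN, TE) \<in> trees_at C r" and rc: "(r, c) \<in> TE"
    and reach: "\<And>m. m \<in> TN \<Longrightarrow> m \<in> desc C c \<Longrightarrow> (c, m) \<in> TE\<^sup>*"
  shows "restr C c (TN, TE) \<in> trees_at C c"
proof -
  note D = trees_atD[OF T]
  have cTN: "c \<in> TN" using D(4) rc by blast
  show ?thesis unfolding restr_def fst_conv snd_conv
  proof (rule trees_atI)
    show "TN \<inter> desc C c \<subseteq> nodes C" using D(1) by blast
    show "{e \<in> TE. fst e \<in> desc C c} \<subseteq> dag_rel C" using D(2) by blast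
    show "c \<in> TN \<inter> desc C c" using cTN by (simp add: desc_def)
  next
    fix a b assume ab: "(a, b) \<in> {e \<in> TE. fst e \<in> desc C c}"
    then have abT: "(a, b) \<in> TE" and ad: "a \<in> desc C c" by simp_all
    have abd: "(a, b) \<in> dag_rel C" using D(2) abT by blast
    have "(c, a) \<in> (dag_rel C)\<^sup>*" using ad by (simp add: desc_def)
    then have "(c, b) \<in> (dag_rel C)\<^sup>*" using abd by (rule rtrancl_into_rtrancl)
    then have "b \<in> desc C c" by (simp add: desc_def)
    then show "a \<in> TN \<inter> desc C c \<and> b \<in> TN \<inter> desc C c"
      using D(4)[OF abT] ad by blast
  next
    fix n assume n: "n \<in> TN \<inter> desc C c" "kind C n = SumN"
    then obtain d where d: "(n, d) \<in> TE" "\<And>d'. (n, d') \<in> TE \<Longrightarrow> d' = d"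
      using D(5) by blast
    show "\<exists>!d. (n, d) \<in> {e \<in> TE. fst e \<in> desc C c}"
    proof (rule ex1I[of _ d])
      show "(n, d) \<in> {e \<in> TE. fst e \<in> desc C c}" using d(1) n(1) by simp
    next
      fix d' assume "(n, d') \<in> {e \<in> TE. fst e \<in> desc C c}"
      then show "d' = d" using d(2) by simp
    qed
  next
    fix n d assume n: "n \<in> TN \<inter> desc C c" "kind C n = ProdN" "d \<in> ch C n"
    have "(n, d) \<in> TE" using D(6) n by blast
    then show "(n, d) \<in> {e \<in> TE. fst e \<in> desc C c}" using n(1) by simp
  next
    fix m assume "m \<in> TN \<inter> desc C c"
    then have "(c, m) \<in> TE\<^sup>*" using reach by blast
    then show "(c, m) \<in> {e \<in> TE. fst e \<in> desc C c}\<^sup>*" by (rule restr_path[OF D(2)])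
  qed
qed

lemma sub_tree_facts:
  assumes rc: "(r, c) \<in> dag_rel C" and T: "T \<in> trees_at C c"
  shows "r \<notin> fst T" "\<And>b. (r, b) \<notin> snd T" "fst T \<subseteq> desc C c"
proof -
  obtain TN TE where TT: "T = (TN, TE)" by (cases T)
  show nr: "r \<notin> fst T"
  proof
    assume "r \<in> fst T"
    then have "(c, r) \<in> (dag_rel C)\<^sup>*" using tree_desc T TT by auto
    then show False using not_back rc by blast
  qed
  show "\<And>b. (r, b) \<notin> snd T" using nr trees_atD(4) T TT by fastforce
  show "fst T \<subseteq> desc C c" using tree_desc T TT by (auto simp: desc_def)
qed

lemma input_trees:
  assumes r: "r \<in> nodes C" "kind C r = InputN"
  shows "trees_at C r = {({r}, {})}"
proof -
  have chr: "ch C r = {}" using input_iff r by blast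
  have "T = ({r}, {})" if T: "T \<in> trees_at C r" for T
  proof -
    obtain TN TE where TT: "T = (TN, TE)" by (cases T)
    note D = trees_atD[OF T[unfolded TT]]
    have noe: "(r, b) \<notin> TE" for b using D(2) chr by auto
    have "TN = {r}"
    proof
      show "TN \<subseteq> {r}"
      proof
        fix m assume m: "m \<in> TN"
        show "m \<in> {r}"
        proof (rule ccontr)
          assume "m \<notin> {r}"
          then obtain c where "(r, c) \<in> TE" using tree_first[OF T[unfolded TT] m] by auto
          then show False using noe by blast
        qed
      qed
    qed (use D(3) in blast)
    moreover have "TE = {}" using D(4) noe calculation by fastforce
    ultimately show ?thesis using TT by simp
  qed
  moreover have "({r}, {}) \<in> trees_at C r"
    by (rule trees_atI) (use r in auto)
  ultimately show ?thesis by blast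
qed

lemma sext_tree:
  assumes r: "r \<in> nodes C" "kind C r = SumN" and c: "c \<in> ch C r" and T: "T \<in> trees_at C c"
  shows "sext r (c, T) \<in> trees_at C r"
proof -
  obtain TN TE where TT: "T = (TN, TE)" by (cases T)
  note D = trees_atD[OF T[unfolded TT]]
  have rc: "(r, c) \<in> dag_rel C" using r c by simp
  note F = sub_tree_facts[OF rc T, unfolded TT fst_conv snd_conv]
  show ?thesis unfolding TT sext_def fst_conv snd_conv
  proof (rule trees_atI)
    show "insert r TN \<subseteq> nodes C" using r D(1) by blast
    show "insert (r, c) TE \<subseteq> dag_rel C" using rc D(2) by blast
    show "r \<in> insert r TN" by simp
  next
    fix a b assume ab: "(a, b) \<in> insert (r, c) TE"
    show "a \<in> insert r TN \<and> b \<in> insert r TN"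
    proof (cases "(a, b) = (r, c)")
      case True then show ?thesis using D(3) by simp
    next
      case False then have "(a, b) \<in> TE" using ab by blast
      then show ?thesis using D(4) by blast
    qed
  next
    fix n assume n: "n \<in> insert r TN" "kind C n = SumN"
    show "\<exists>!d. (n, d) \<in> insert (r, c) TE"
    proof (cases "n = r")
      case True
      show ?thesis
      proof (rule ex1I[of _ c])
        show "(n, c) \<in> insert (r, c) TE" using True by simp
      next
        fix d assume "(n, d) \<in> insert (r, c) TE"
        then show "d = c" using True F(2)[of d] by simp
      qed
    next
      case False
      then have "n \<in> TN" using n by simp
      then obtain d where d: "(n, d) \<in> TE" "\<And>d'. (n, d') \<in> TE \<Longrightarrow> d' = d" using D(5) n by blast
      show ?thesis
      proof (rule ex1I[of _ d])
        show "(n, d) \<in> insert (r, c) TE" using d(1) by simp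
      next
        fix d' assume "(n, d') \<in> insert (r, c) TE"
        then show "d' = d" using False d(2) by simp
      qed
    qed
  next
    fix n d assume n: "n \<in> insert r TN" "kind C n = ProdN" "d \<in> ch C n"
    have "n \<noteq> r" using n(2) r(2) by auto
    then have "n \<in> TN" using n(1) by simp
    then have "(n, d) \<in> TE" using D(6) n by blast
    then show "(n, d) \<in> insert (r, c) TE" by simp
  next
    fix m assume m: "m \<in> insert r TN"
    show "(r, m) \<in> (insert (r, c) TE)\<^sup>*"
    proof (cases "m = r")
      case False
      then have "m \<in> TN" using m by simp
      then have "(c, m) \<in> TE\<^sup>*" by (rule D(7))
      then have cm: "(c, m) \<in> (insert (r, c) TE)\<^sup>*"
        by (rule rtrancl_mono[THEN subsetD, rotated]) (rule subset_insertI)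
      have "(r, c) \<in> insert (r, c) TE" by simp
      then show ?thesis using cm by (rule converse_rtrancl_into_rtrancl)
    qed simp
  qed
qed

lemma sum_trees:
  assumes r: "r \<in> nodes C" "kind C r = SumN"
  shows "trees_at C r = sext r ` Sigma (ch C r) (trees_at C)"
    and "inj_on (sext r) (Sigma (ch C r) (trees_at C))"
proof -
  show "trees_at C r = sext r ` Sigma (ch C r) (trees_at C)"
  proof
    show "sext r ` Sigma (ch C r) (trees_at C) \<subseteq> trees_at C r"
    proof
      fix T assume "T \<in> sext r ` Sigma (ch C r) (trees_at C)"
      then obtain c T' where "c \<in> ch C r" "T' \<in> trees_at C c" "T = sext r (c, T')" by blast
      then show "T \<in> trees_at C r" using sext_tree[OF r] by blast
    qed
  next
    show "trees_at C r \<subseteq> sext r ` Sigma (ch C r) (trees_at C)"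
    proof
      fix T assume T: "T \<in> trees_at C r"
      obtain TN TE where TT: "T = (TN, TE)" by (cases T)
      note D = trees_atD[OF T[unfolded TT]]
      obtain c where c1: "(r, c) \<in> TE" and c2: "\<forall>d. (r, d) \<in> TE \<longrightarrow> d = c"
        using D(5)[OF D(3) r(2)] by (elim ex1E) blast
      have rc: "(r, c) \<in> dag_rel C" using D(2) c1 by blast
      then have cch: "c \<in> ch C r" by simp
      have first: "(c, m) \<in> TE\<^sup>*" if mm: "m \<in> TN" "m \<noteq> r" for m
      proof -
        obtain c' where "(r, c') \<in> TE" "(c', m) \<in> TE\<^sup>*" using tree_first[OF T[unfolded TT] mm] by blast
        moreover have "c' = c" using c2 calculation(1) by blast
        ultimately show ?thesis by simp
      qed
      have reach: "(c, m) \<in> TE\<^sup>*" if "m \<in> TN" "m \<in> desc C c" for m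
      proof -
        have "m \<noteq> r"
        proof
          assume "m = r"
          then have "(c, r) \<in> (dag_rel C)\<^sup>*" using that(2) by (simp add: desc_def)
          then show False using not_back[OF rc] by blast
        qed
        then show ?thesis using first that(1) by blast
      qed
      have R: "restr C c (TN, TE) \<in> trees_at C c" by (rule restr_tree[OF T[unfolded TT] c1 reach])
      have inD: "m \<in> desc C c" if "m \<in> TN" "m \<noteq> r" for m
      proof -
        have "(c, m) \<in> (dag_rel C)\<^sup>*" using first[OF that] by (rule rtrancl_mono[OF D(2), THEN subsetD])
        then show ?thesis by (simp add: desc_def)
      qed
      have e1: "insert r (TN \<inter> desc C c) = TN" using D(3) inD by blast
      have e2: "insert (r, c) {e \<in> TE. fst e \<in> desc C c} = TE"
      proof
        show "TE \<subseteq> insert (r, c) {e \<in> TE. fst e \<in> desc C c}"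
        proof
          fix e assume e: "e \<in> TE"
          obtain a b where ab: "e = (a, b)" by (cases e)
          show "e \<in> insert (r, c) {e \<in> TE. fst e \<in> desc C c}"
          proof (cases "a = r")
            case True
            then have "b = c" using c2 e ab by blast
            then show ?thesis using True ab by simp
          next
            case False
            have "a \<in> TN" using D(4) e ab by blast
            then have "a \<in> desc C c" using inD False by blast
            then show ?thesis using e ab by simp
          qed
        qed
      qed (use c1 in blast)
      have "T = sext r (c, restr C c (TN, TE))"
        unfolding sext_def restr_def TT fst_conv snd_conv using e1 e2 by simp
      then show "T \<in> sext r ` Sigma (ch C r) (trees_at C)" using cch R by blast
    qed
  qed
  show "inj_on (sext r) (Sigma (ch C r) (trees_at C))"
  proof (rule inj_onI)
    fix p q assume p: "p \<in> Sigma (ch C r) (trees_at C)" and q: "q \<in> Sigma (ch C r) (trees_at C)"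
      and eq: "sext r p = sext r q"
    obtain c1 T1 where p1: "p = (c1, T1)" by (cases p)
    obtain c2 T2 where q1: "q = (c2, T2)" by (cases q)
    have m1: "(r, c1) \<in> dag_rel C" "T1 \<in> trees_at C c1" using p p1 r by auto
    have m2: "(r, c2) \<in> dag_rel C" "T2 \<in> trees_at C c2" using q q1 r by auto
    note F1 = sub_tree_facts[OF m1]
    note F2 = sub_tree_facts[OF m2]
    have eN: "insert r (fst T1) = insert r (fst T2)" and eE: "insert (r, c1) (snd T1) = insert (r, c2) (snd T2)"
      using eq p1 q1 by (simp_all add: sext_def)
    have "(r, c1) \<in> insert (r, c2) (snd T2)" using eE by (metis insertI1)
    then have cc: "c1 = c2" using F2(2)[of c1] by simp
    have "fst T1 = fst T2" using eN insert_ident[OF F1(1) F2(1)] by blast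
    moreover have "snd T1 = snd T2"
    proof -
      have a1: "(r, c2) \<notin> snd T1" using F1(2) by blast
      have a2: "(r, c2) \<notin> snd T2" using F2(2) by blast
      have "insert (r, c2) (snd T1) = insert (r, c2) (snd T2)" using eE cc by simp
      then show ?thesis using insert_ident[OF a1 a2] by blast
    qed
    ultimately show "p = q" using p1 q1 cc by (simp add: prod_eq_iff)
  qed
qed

end


context pcw begin

lemma tD1: "T \<in> trees_at C r \<Longrightarrow> fst T \<subseteq> nodes C"
  using trees_atD(1)[of "fst T" "snd T" r] by simp
lemma tD2: "T \<in> trees_at C r \<Longrightarrow> snd T \<subseteq> dag_rel C"
  using trees_atD(2)[of "fst T" "snd T" r] by simp
lemma tD3: "T \<in> trees_at C r \<Longrightarrow> r \<in> fst T"
  using trees_atD(3)[of "fst T" "snd T" r] by simp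
lemma tD4: "T \<in> trees_at C r \<Longrightarrow> (a, b) \<in> snd T \<Longrightarrow> a \<in> fst T \<and> b \<in> fst T"
  using trees_atD(4)[of "fst T" "snd T" r] by simp
lemma tD5: "T \<in> trees_at C r \<Longrightarrow> n \<in> fst T \<Longrightarrow> kind C n = SumN \<Longrightarrow> \<exists>!c. (n, c) \<in> snd T"
  using trees_atD(5)[of "fst T" "snd T" r] by simp
lemma tD6: "T \<in> trees_at C r \<Longrightarrow> n \<in> fst T \<Longrightarrow> kind C n = ProdN \<Longrightarrow> c \<in> ch C n \<Longrightarrow> (n, c) \<in> snd T"
  using trees_atD(6)[of "fst T" "snd T" r] by simp
lemma tD7: "T \<in> trees_at C r \<Longrightarrow> m \<in> fst T \<Longrightarrow> (r, m) \<in> (snd T)\<^sup>*"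
  using trees_atD(7)[of "fst T" "snd T" r] by simp

lemma tree_child:
  assumes T: "(TN, TE) \<in> trees_at C r" and m: "m \<in> TN" "m \<noteq> r"
  shows "\<exists>c'. c' \<in> ch C r \<and> (r, c') \<in> TE \<and> (c', m) \<in> TE\<^sup>* \<and> m \<in> desc C c'"
proof -
  obtain c' where c': "(r, c') \<in> TE" "(c', m) \<in> TE\<^sup>*" using tree_first[OF T m] by blast
  have "(r, c') \<in> dag_rel C" using trees_atD(2)[OF T] c'(1) by blast
  then have "c' \<in> ch C r" by simp
  moreover have "(c', m) \<in> (dag_rel C)\<^sup>*" using c'(2) by (rule rtrancl_mono[OF trees_atD(2)[OF T], THEN subsetD])
  ultimately show ?thesis using c' by (auto simp: desc_def)
qed

lemma pext_facts:
  assumes r: "r \<in> nodes C" "kind C r = ProdN" and \<sigma>: "\<sigma> \<in> PiE (ch C r) (trees_at C)"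
  shows "\<And>c. c \<in> ch C r \<Longrightarrow> \<sigma> c \<in> trees_at C c"
    "\<And>c. c \<in> ch C r \<Longrightarrow> r \<notin> fst (\<sigma> c)"
    "\<And>c b. c \<in> ch C r \<Longrightarrow> (r, b) \<notin> snd (\<sigma> c)"
    "\<And>c. c \<in> ch C r \<Longrightarrow> fst (\<sigma> c) \<subseteq> desc C c"
    "\<And>c c' m. c \<in> ch C r \<Longrightarrow> c' \<in> ch C r \<Longrightarrow> m \<in> fst (\<sigma> c) \<Longrightarrow> m \<in> desc C c' \<Longrightarrow> c = c'"
proof -
  show S: "\<And>c. c \<in> ch C r \<Longrightarrow> \<sigma> c \<in> trees_at C c" using \<sigma> by (simp add: PiE_iff)
  have rc: "\<And>c. c \<in> ch C r \<Longrightarrow> (r, c) \<in> dag_rel C" using r by simp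
  show "\<And>c. c \<in> ch C r \<Longrightarrow> r \<notin> fst (\<sigma> c)" using sub_tree_facts(1)[OF rc S] by blast
  show "\<And>c b. c \<in> ch C r \<Longrightarrow> (r, b) \<notin> snd (\<sigma> c)" using sub_tree_facts(2)[OF rc S] by blast
  show D: "\<And>c. c \<in> ch C r \<Longrightarrow> fst (\<sigma> c) \<subseteq> desc C c" using sub_tree_facts(3)[OF rc S] by blast
  fix c c' m assume c: "c \<in> ch C r" "c' \<in> ch C r" "m \<in> fst (\<sigma> c)" "m \<in> desc C c'"
  have "m \<in> desc C c" using D[OF c(1)] c(3) by blast
  then show "c = c'" using desc_unique[OF r c(1,2)] c(4) by (simp add: desc_def)
qed

lemma pext_tree:
  assumes r: "r \<in> nodes C" "kind C r = ProdN" and \<sigma>: "\<sigma> \<in> PiE (ch C r) (trees_at C)"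
  shows "pext C r \<sigma> \<in> trees_at C r"
proof -
  note P = pext_facts[OF r \<sigma>]
  let ?K = "ch C r"
  show ?thesis unfolding pext_def
  proof (rule trees_atI)
    show "insert r (\<Union>c\<in>?K. fst (\<sigma> c)) \<subseteq> nodes C" using r tD1[OF P(1)] by blast
    show "Pair r ` ?K \<union> (\<Union>c\<in>?K. snd (\<sigma> c)) \<subseteq> dag_rel C" using r tD2[OF P(1)] by auto
    show "r \<in> insert r (\<Union>c\<in>?K. fst (\<sigma> c))" by simp
  next
    fix a b assume ab: "(a, b) \<in> Pair r ` ?K \<union> (\<Union>c\<in>?K. snd (\<sigma> c))"
    show "a \<in> insert r (\<Union>c\<in>?K. fst (\<sigma> c)) \<and> b \<in> insert r (\<Union>c\<in>?K. fst (\<sigma> c))"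
    proof (cases "(a, b) \<in> Pair r ` ?K")
      case True
      then have "a = r" "b \<in> ?K" by auto
      then show ?thesis using tD3[OF P(1)] by blast
    next
      case False
      then obtain c where "c \<in> ?K" "(a, b) \<in> snd (\<sigma> c)" using ab by blast
      then show ?thesis using tD4[OF P(1)] by blast
    qed
  next
    fix n assume n: "n \<in> insert r (\<Union>c\<in>?K. fst (\<sigma> c))" "kind C n = SumN"
    have "n \<noteq> r" using n(2) r(2) by auto
    then obtain c where c: "c \<in> ?K" "n \<in> fst (\<sigma> c)" using n(1) by blast
    obtain d where d1: "(n, d) \<in> snd (\<sigma> c)" and d2: "\<forall>d'. (n, d') \<in> snd (\<sigma> c) \<longrightarrow> d' = d"
      using tD5[OF P(1)[OF c(1)] c(2) n(2)] by (elim ex1E) blast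
    show "\<exists>!d. (n, d) \<in> Pair r ` ?K \<union> (\<Union>c\<in>?K. snd (\<sigma> c))"
    proof (rule ex1I[of _ d])
      show "(n, d) \<in> Pair r ` ?K \<union> (\<Union>c\<in>?K. snd (\<sigma> c))" using d1 c(1) by blast
    next
      fix d' assume d': "(n, d') \<in> Pair r ` ?K \<union> (\<Union>c\<in>?K. snd (\<sigma> c))"
      have "(n, d') \<notin> Pair r ` ?K" using \<open>n \<noteq> r\<close> by auto
      then obtain c' where c': "c' \<in> ?K" "(n, d') \<in> snd (\<sigma> c')" using d' by blast
      have "n \<in> fst (\<sigma> c')" using tD4[OF P(1)[OF c'(1)] c'(2)] by blast
      moreover have "n \<in> desc C c" using P(4)[OF c(1)] c(2) by blast
      ultimately have "c' = c" using P(5)[OF c'(1) c(1)] by blast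
      then show "d' = d" using d2 c'(2) by blast
    qed
  next
    fix n d assume n: "n \<in> insert r (\<Union>c\<in>?K. fst (\<sigma> c))" "kind C n = ProdN" "d \<in> ch C n"
    show "(n, d) \<in> Pair r ` ?K \<union> (\<Union>c\<in>?K. snd (\<sigma> c))"
    proof (cases "n = r")
      case True then show ?thesis using n(3) by blast
    next
      case False
      then obtain c where c: "c \<in> ?K" "n \<in> fst (\<sigma> c)" using n(1) by blast
      have "(n, d) \<in> snd (\<sigma> c)" using tD6[OF P(1)[OF c(1)] c(2) n(2,3)] .
      then show ?thesis using c(1) by blast
    qed
  next
    fix m assume m: "m \<in> insert r (\<Union>c\<in>?K. fst (\<sigma> c))"
    show "(r, m) \<in> (Pair r ` ?K \<union> (\<Union>c\<in>?K. snd (\<sigma> c)))\<^sup>*"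
    proof (cases "m = r")
      case False
      then obtain c where c: "c \<in> ?K" "m \<in> fst (\<sigma> c)" using m by blast
      have "(c, m) \<in> (snd (\<sigma> c))\<^sup>*" using tD7[OF P(1)[OF c(1)] c(2)] .
      moreover have "snd (\<sigma> c) \<subseteq> Pair r ` ?K \<union> (\<Union>c\<in>?K. snd (\<sigma> c))" using c(1) by blast
      ultimately have cm: "(c, m) \<in> (Pair r ` ?K \<union> (\<Union>c\<in>?K. snd (\<sigma> c)))\<^sup>*"
        using rtrancl_mono by blast
      have "(r, c) \<in> Pair r ` ?K \<union> (\<Union>c\<in>?K. snd (\<sigma> c))" using c(1) by blast
      then show ?thesis using cm by (rule converse_rtrancl_into_rtrancl)
    qed simp
  qed
qed

lemma restr_pext:
  assumes r: "r \<in> nodes C" "kind C r = ProdN" and \<sigma>: "\<sigma> \<in> PiE (ch C r) (trees_at C)"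
    and c: "c \<in> ch C r"
  shows "restr C c (pext C r \<sigma>) = \<sigma> c"
proof -
  note P = pext_facts[OF r \<sigma>]
  let ?K = "ch C r"
  have rnd: "r \<notin> desc C c"
  proof
    assume "r \<in> desc C c"
    then have "(c, r) \<in> (dag_rel C)\<^sup>*" by (simp add: desc_def)
    moreover have "(r, c) \<in> dag_rel C" using r c by simp
    ultimately show False using not_back by blast
  qed
  have e1: "insert r (\<Union>c\<in>?K. fst (\<sigma> c)) \<inter> desc C c = fst (\<sigma> c)"
  proof
    show "insert r (\<Union>c\<in>?K. fst (\<sigma> c)) \<inter> desc C c \<subseteq> fst (\<sigma> c)"
    proof
      fix x assume x: "x \<in> insert r (\<Union>c\<in>?K. fst (\<sigma> c)) \<inter> desc C c"
      then have "x \<noteq> r" using rnd by blast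
      then obtain c' where c': "c' \<in> ?K" "x \<in> fst (\<sigma> c')" using x by blast
      have "c' = c" using P(5)[OF c'(1) c c'(2)] x by blast
      then show "x \<in> fst (\<sigma> c)" using c' by simp
    qed
    show "fst (\<sigma> c) \<subseteq> insert r (\<Union>c\<in>?K. fst (\<sigma> c)) \<inter> desc C c"
      using P(4)[OF c] c by blast
  qed
  have e2: "{e \<in> Pair r ` ?K \<union> (\<Union>c\<in>?K. snd (\<sigma> c)). fst e \<in> desc C c} = snd (\<sigma> c)"
  proof
    show "{e \<in> Pair r ` ?K \<union> (\<Union>c\<in>?K. snd (\<sigma> c)). fst e \<in> desc C c} \<subseteq> snd (\<sigma> c)"
    proof
      fix e assume e: "e \<in> {e \<in> Pair r ` ?K \<union> (\<Union>c\<in>?K. snd (\<sigma> c)). fst e \<in> desc C c}"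
      obtain a b where ab: "e = (a, b)" by (cases e)
      have ad: "a \<in> desc C c" using e ab by simp
      then have "(a, b) \<notin> Pair r ` ?K" using rnd by auto
      then obtain c' where c': "c' \<in> ?K" "(a, b) \<in> snd (\<sigma> c')" using e ab by blast
      have "a \<in> fst (\<sigma> c')" using tD4[OF P(1)[OF c'(1)] c'(2)] by blast
      then have "c' = c" using P(5)[OF c'(1) c] ad by blast
      then show "e \<in> snd (\<sigma> c)" using c' ab by simp
    qed
    show "snd (\<sigma> c) \<subseteq> {e \<in> Pair r ` ?K \<union> (\<Union>c\<in>?K. snd (\<sigma> c)). fst e \<in> desc C c}"
    proof
      fix e assume e: "e \<in> snd (\<sigma> c)"
      obtain a b where ab: "e = (a, b)" by (cases e)
      have "a \<in> fst (\<sigma> c)" using tD4[OF P(1)[OF c]] e ab by blast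
      then have "a \<in> desc C c" using P(4)[OF c] by blast
      moreover have "e \<in> (\<Union>c\<in>?K. snd (\<sigma> c))" using e c by blast
      ultimately show "e \<in> {e \<in> Pair r ` ?K \<union> (\<Union>c\<in>?K. snd (\<sigma> c)). fst e \<in> desc C c}"
        using ab by simp
    qed
  qed
  show ?thesis unfolding restr_def pext_def fst_conv snd_conv using e1 e2 by (simp add: prod_eq_iff)
qed


lemma prod_trees:
  assumes r: "r \<in> nodes C" "kind C r = ProdN"
  shows "trees_at C r = pext C r ` PiE (ch C r) (trees_at C)"
    and "inj_on (pext C r) (PiE (ch C r) (trees_at C))"
proof -
  let ?K = "ch C r"
  show "trees_at C r = pext C r ` PiE ?K (trees_at C)"
  proof
    show "pext C r ` PiE ?K (trees_at C) \<subseteq> trees_at C r"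
      using pext_tree[OF r] by blast
  next
    show "trees_at C r \<subseteq> pext C r ` PiE ?K (trees_at C)"
    proof
      fix T assume T: "T \<in> trees_at C r"
      obtain TN TE where TT: "T = (TN, TE)" by (cases T)
      note D = trees_atD[OF T[unfolded TT]]
      define \<sigma> where "\<sigma> = restrict (\<lambda>c. restr C c (TN, TE)) ?K"
      have inD: "\<exists>c'. c' \<in> ?K \<and> m \<in> desc C c'" if "m \<in> TN" "m \<noteq> r" for m
        using tree_child[OF T[unfolded TT] that] by blast
      have mem: "\<sigma> \<in> PiE ?K (trees_at C)"
      proof -
        have "restr C c (TN, TE) \<in> trees_at C c" if c: "c \<in> ?K" for c
        proof (rule restr_tree[OF T[unfolded TT]])
          show "(r, c) \<in> TE" using D(6)[OF D(3) r(2) c] .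
          fix m assume m: "m \<in> TN" "m \<in> desc C c"
          have "m \<noteq> r"
          proof
            assume "m = r"
            then have "(c, r) \<in> (dag_rel C)\<^sup>*" using m(2) by (simp add: desc_def)
            then show False using not_back[of r c] r c by simp
          qed
          then obtain c' where c': "c' \<in> ?K" "(r, c') \<in> TE" "(c', m) \<in> TE\<^sup>*" "m \<in> desc C c'"
            using tree_child[OF T[unfolded TT] m(1)] by blast
          have "c' = c" using desc_unique[OF r c'(1) c] c'(4) m(2) by (simp add: desc_def)
          then show "(c, m) \<in> TE\<^sup>*" using c'(3) by simp
        qed
        then show ?thesis unfolding \<sigma>_def by (simp add: PiE_iff)
      qed
      have e1: "insert r (\<Union>c\<in>?K. fst (\<sigma> c)) = TN"
      proof
        show "insert r (\<Union>c\<in>?K. fst (\<sigma> c)) \<subseteq> TN"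
          using D(3) by (auto simp: \<sigma>_def restr_def)
        show "TN \<subseteq> insert r (\<Union>c\<in>?K. fst (\<sigma> c))"
        proof
          fix m assume m: "m \<in> TN"
          show "m \<in> insert r (\<Union>c\<in>?K. fst (\<sigma> c))"
          proof (cases "m = r")
            case False
            then obtain c' where "c' \<in> ?K" "m \<in> desc C c'" using inD m by blast
            then show ?thesis using m by (auto simp: \<sigma>_def restr_def)
          qed simp
        qed
      qed
      have e2: "Pair r ` ?K \<union> (\<Union>c\<in>?K. snd (\<sigma> c)) = TE"
      proof
        show "Pair r ` ?K \<union> (\<Union>c\<in>?K. snd (\<sigma> c)) \<subseteq> TE"
        proof
          fix e assume e: "e \<in> Pair r ` ?K \<union> (\<Union>c\<in>?K. snd (\<sigma> c))"
          show "e \<in> TE"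
          proof (cases "e \<in> Pair r ` ?K")
            case True
            then obtain c where "c \<in> ?K" "e = (r, c)" by blast
            then show ?thesis using D(6)[OF D(3) r(2)] by blast
          next
            case False
            then obtain c where "c \<in> ?K" "e \<in> snd (\<sigma> c)" using e by blast
            then show ?thesis by (simp add: \<sigma>_def restr_def)
          qed
        qed
        show "TE \<subseteq> Pair r ` ?K \<union> (\<Union>c\<in>?K. snd (\<sigma> c))"
        proof
          fix e assume e: "e \<in> TE"
          obtain a b where ab: "e = (a, b)" by (cases e)
          have aT: "a \<in> TN" using D(4) e ab by blast
          show "e \<in> Pair r ` ?K \<union> (\<Union>c\<in>?K. snd (\<sigma> c))"
          proof (cases "a = r")
            case True
            have "(a, b) \<in> dag_rel C" using D(2) e ab by blast
            then have "b \<in> ?K" using True by simp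
            then show ?thesis using True ab by blast
          next
            case False
            then obtain c' where c': "c' \<in> ?K" "a \<in> desc C c'" using inD aT by blast
            then have "e \<in> snd (\<sigma> c')" using e ab by (simp add: \<sigma>_def restr_def)
            then show ?thesis using c'(1) by blast
          qed
        qed
      qed
      have "T = pext C r \<sigma>" unfolding pext_def TT using e1 e2 by simp
      then show "T \<in> pext C r ` PiE ?K (trees_at C)" using mem by blast
    qed
  qed
  show "inj_on (pext C r) (PiE ?K (trees_at C))"
  proof (rule inj_onI)
    fix \<sigma>1 \<sigma>2 assume s1: "\<sigma>1 \<in> PiE ?K (trees_at C)" and s2: "\<sigma>2 \<in> PiE ?K (trees_at C)"
      and eq: "pext C r \<sigma>1 = pext C r \<sigma>2"
    show "\<sigma>1 = \<sigma>2"
    proof (rule PiE_ext[OF s1 s2])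
      fix c assume c: "c \<in> ?K"
      have "\<sigma>1 c = restr C c (pext C r \<sigma>1)" using restr_pext[OF r s1 c] by simp
      also have "\<dots> = restr C c (pext C r \<sigma>2)" using eq by simp
      also have "\<dots> = \<sigma>2 c" using restr_pext[OF r s2 c] by simp
      finally show "\<sigma>1 c = \<sigma>2 c" .
    qed
  qed
qed

lemma tw_input: "kind C r = InputN \<Longrightarrow> tw C \<psi> h ({r}, {}) = h r"
proof -
  assume k: "kind C r = InputN"
  have "ET C ({r}, {}) = {}" by (simp add: ET_def)
  moreover have "INs C ({r}, {}) = {r}" using k by (auto simp: INs_def)
  ultimately show ?thesis by (simp add: tw_def)
qed

lemma tw_sext:
  assumes r: "r \<in> nodes C" "kind C r = SumN" and c: "c \<in> ch C r" and T: "T \<in> trees_at C c"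
  shows "tw C \<psi> h (sext r (c, T)) = exp (\<psi> (r, c)) * tw C \<psi> h T"
proof -
  have rc: "(r, c) \<in> dag_rel C" using r c by simp
  note F = sub_tree_facts[OF rc T]
  have e1: "ET C (sext r (c, T)) = insert (r, c) (ET C T)"
    using r(2) by (auto simp: ET_def sext_def)
  have nin: "(r, c) \<notin> ET C T" using F(2) by (simp add: ET_def)
  have fin: "finite (ET C T)" using tree_fin_edges[OF T] by (simp add: ET_def)
  have e2: "INs C (sext r (c, T)) = INs C T"
    using r(2) by (auto simp: INs_def sext_def)
  show ?thesis unfolding tw_def e1 e2 using nin fin by simp
qed

lemma tw_pext:
  assumes r: "r \<in> nodes C" "kind C r = ProdN" and \<sigma>: "\<sigma> \<in> PiE (ch C r) (trees_at C)"
  shows "tw C \<psi> h (pext C r \<sigma>) = (\<Prod>c\<in>ch C r. tw C \<psi> h (\<sigma> c))"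
proof -
  note P = pext_facts[OF r \<sigma>]
  let ?K = "ch C r"
  have finK: "finite ?K" using fin_ch r by blast
  have e1: "ET C (pext C r \<sigma>) = (\<Union>c\<in>?K. ET C (\<sigma> c))"
    using r(2) by (auto simp: ET_def pext_def)
  have e2: "INs C (pext C r \<sigma>) = (\<Union>c\<in>?K. INs C (\<sigma> c))"
    using r(2) by (auto simp: INs_def pext_def)
  have d1: "\<forall>i\<in>?K. \<forall>j\<in>?K. i \<noteq> j \<longrightarrow> ET C (\<sigma> i) \<inter> ET C (\<sigma> j) = {}"
  proof (intro ballI impI)
    fix i j assume ij: "i \<in> ?K" "j \<in> ?K" "i \<noteq> j"
    show "ET C (\<sigma> i) \<inter> ET C (\<sigma> j) = {}"
    proof (rule ccontr)
      assume "ET C (\<sigma> i) \<inter> ET C (\<sigma> j) \<noteq> {}"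
      then obtain a b where ab: "(a, b) \<in> snd (\<sigma> i)" "(a, b) \<in> snd (\<sigma> j)" by (auto simp: ET_def)
      have "a \<in> fst (\<sigma> i)" using tD4[OF P(1)[OF ij(1)] ab(1)] by blast
      moreover have "a \<in> desc C j" using tD4[OF P(1)[OF ij(2)] ab(2)] P(4)[OF ij(2)] by blast
      ultimately show False using P(5)[OF ij(1,2)] ij(3) by blast
    qed
  qed
  have d2: "\<forall>i\<in>?K. \<forall>j\<in>?K. i \<noteq> j \<longrightarrow> INs C (\<sigma> i) \<inter> INs C (\<sigma> j) = {}"
  proof (intro ballI impI)
    fix i j assume ij: "i \<in> ?K" "j \<in> ?K" "i \<noteq> j"
    show "INs C (\<sigma> i) \<inter> INs C (\<sigma> j) = {}"
    proof (rule ccontr)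
      assume "INs C (\<sigma> i) \<inter> INs C (\<sigma> j) \<noteq> {}"
      then obtain a where a: "a \<in> fst (\<sigma> i)" "a \<in> fst (\<sigma> j)" by (auto simp: INs_def)
      have "a \<in> desc C j" using a(2) P(4)[OF ij(2)] by blast
      then show False using P(5)[OF ij(1,2) a(1)] ij(3) by blast
    qed
  qed
  have f1: "\<forall>i\<in>?K. finite (ET C (\<sigma> i))"
    using tree_fin_edges[OF P(1)] by (simp add: ET_def)
  have f2: "\<forall>i\<in>?K. finite (INs C (\<sigma> i))"
    using tree_fin_nodes[OF P(1)] by (simp add: INs_def)
  have "tw C \<psi> h (pext C r \<sigma>) = (\<Prod>c\<in>?K. \<Prod>e\<in>ET C (\<sigma> c). exp (\<psi> e)) * (\<Prod>c\<in>?K. \<Prod>n\<in>INs C (\<sigma> c). h n)"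
    unfolding tw_def e1 e2 prod.UNION_disjoint[OF finK f1 d1] prod.UNION_disjoint[OF finK f2 d2] ..
  also have "\<dots> = (\<Prod>c\<in>?K. tw C \<psi> h (\<sigma> c))"
    unfolding tw_def prod.distrib ..
  finally show ?thesis .
qed

lemma tree_expand: "n \<in> nodes C \<Longrightarrow> (\<Sum>T\<in>trees_at C n. tw C \<psi> h T) = cval C \<psi> h n"
proof (induction n rule: wf_induct_rule[OF wf_conv])
  case (1 n)
  have IH: "c \<in> ch C n \<Longrightarrow> (\<Sum>T\<in>trees_at C c. tw C \<psi> h T) = cval C \<psi> h c" for c
    using 1 ch_sub by auto
  have finK: "finite (ch C n)" using fin_ch 1(2) by blast
  show ?case
  proof (cases "kind C n")
    case InputN
    then show ?thesis using 1(2) by (simp add: input_trees tw_input cval_rec)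
  next
    case SumN
    have "(\<Sum>T\<in>trees_at C n. tw C \<psi> h T) = (\<Sum>p\<in>Sigma (ch C n) (trees_at C). tw C \<psi> h (sext n p))"
      unfolding sum_trees(1)[OF 1(2) SumN] by (rule sum.reindex[OF sum_trees(2)[OF 1(2) SumN], unfolded comp_def])
    also have "\<dots> = (\<Sum>p\<in>Sigma (ch C n) (trees_at C). exp (\<psi> (n, fst p)) * tw C \<psi> h (snd p))"
      by (rule sum.cong) (auto simp: tw_sext[OF 1(2) SumN])
    also have "\<dots> = (\<Sum>c\<in>ch C n. \<Sum>T\<in>trees_at C c. exp (\<psi> (n, c)) * tw C \<psi> h T)"
      by (subst sum.Sigma[OF finK]) (auto simp: tree_fin case_prod_beta)
    also have "\<dots> = (\<Sum>c\<in>ch C n. exp (\<psi> (n, c)) * cval C \<psi> h c)"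
      by (rule sum.cong) (simp_all add: sum_distrib_left[symmetric] IH)
    also have "\<dots> = cval C \<psi> h n" using 1(2) SumN by (simp add: cval_rec)
    finally show ?thesis .
  next
    case ProdN
    have "(\<Sum>T\<in>trees_at C n. tw C \<psi> h T) = (\<Sum>\<sigma>\<in>PiE (ch C n) (trees_at C). tw C \<psi> h (pext C n \<sigma>))"
      unfolding prod_trees(1)[OF 1(2) ProdN] by (rule sum.reindex[OF prod_trees(2)[OF 1(2) ProdN], unfolded comp_def])
    also have "\<dots> = (\<Sum>\<sigma>\<in>PiE (ch C n) (trees_at C). \<Prod>c\<in>ch C n. tw C \<psi> h (\<sigma> c))"
      by (rule sum.cong) (simp_all add: tw_pext[OF 1(2) ProdN])
    also have "\<dots> = (\<Prod>c\<in>ch C n. \<Sum>T\<in>trees_at C c. tw C \<psi> h T)"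
      by (rule prod_sum_PiE[OF finK tree_fin, symmetric])
    also have "\<dots> = (\<Prod>c\<in>ch C n. cval C \<psi> h c)"
      by (rule prod.cong) (simp_all add: IH)
    also have "\<dots> = cval C \<psi> h n" using 1(2) ProdN by (simp add: cval_rec)
    finally show ?thesis .
  qed
qed

lemma tree_vars: "n \<in> nodes C \<Longrightarrow> \<forall>T\<in>trees_at C n. inj_on (ivar C) (INs C T) \<and> ivar C ` INs C T = scope C n"
proof (induction n rule: wf_induct_rule[OF wf_conv])
  case (1 n)
  have IH: "c \<in> ch C n \<Longrightarrow> T \<in> trees_at C c \<Longrightarrow> inj_on (ivar C) (INs C T) \<and> ivar C ` INs C T = scope C c" for c T
    using 1 ch_sub by auto
  show ?case
  proof (cases "kind C n")
    case InputN
    have "INs C ({n}, {}) = {n}" using InputN by (auto simp: INs_def)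
    then show ?thesis using 1(2) InputN by (simp add: input_trees scope_unfold)
  next
    case SumN
    show ?thesis
    proof
      fix T assume "T \<in> trees_at C n"
      then obtain c T' where cT: "c \<in> ch C n" "T' \<in> trees_at C c" "T = sext n (c, T')"
        unfolding sum_trees(1)[OF 1(2) SumN] by blast
      have "INs C T = INs C T'" using cT(3) SumN by (auto simp: INs_def sext_def)
      moreover have "scope C n = scope C c" using smooth_scope[OF 1(2) SumN cT(1)] .
      ultimately show "inj_on (ivar C) (INs C T) \<and> ivar C ` INs C T = scope C n"
        using IH[OF cT(1,2)] by simp
    qed
  next
    case ProdN
    show ?thesis
    proof
      fix T assume "T \<in> trees_at C n"
      then obtain \<sigma> where s: "\<sigma> \<in> PiE (ch C n) (trees_at C)" "T = pext C n \<sigma>"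
        unfolding prod_trees(1)[OF 1(2) ProdN] by blast
      note P = pext_facts[OF 1(2) ProdN s(1)]
      have e: "INs C T = (\<Union>c\<in>ch C n. INs C (\<sigma> c))"
        using s(2) ProdN by (auto simp: INs_def pext_def)
      have img: "\<And>c. c \<in> ch C n \<Longrightarrow> ivar C ` INs C (\<sigma> c) = scope C c" using IH P(1) by blast
      have inj: "\<And>c. c \<in> ch C n \<Longrightarrow> inj_on (ivar C) (INs C (\<sigma> c))" using IH P(1) by blast
      have "inj_on (ivar C) (\<Union>c\<in>ch C n. INs C (\<sigma> c))"
      proof (rule inj_onI)
        fix x y assume x: "x \<in> (\<Union>c\<in>ch C n. INs C (\<sigma> c))" and y: "y \<in> (\<Union>c\<in>ch C n. INs C (\<sigma> c))"
          and xy: "ivar C x = ivar C y"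
        obtain c1 where c1: "c1 \<in> ch C n" "x \<in> INs C (\<sigma> c1)" using x by blast
        obtain c2 where c2: "c2 \<in> ch C n" "y \<in> INs C (\<sigma> c2)" using y by blast
        have "ivar C x \<in> scope C c1" using img[OF c1(1)] c1(2) by blast
        moreover have "ivar C y \<in> scope C c2" using img[OF c2(1)] c2(2) by blast
        ultimately have sc: "ivar C x \<in> scope C c1 \<inter> scope C c2" using xy by simp
        have cc: "c1 = c2"
        proof (rule ccontr)
          assume ne: "c1 \<noteq> c2"
          show False using decomp_disj[OF 1(2) ProdN c1(1) c2(1) ne] sc by simp
        qed
        have y1: "y \<in> INs C (\<sigma> c1)" using c2(2) cc by simp
        show "x = y" by (rule inj_onD[OF inj[OF c1(1)] xy c1(2) y1])
      qed
      moreover have "ivar C ` (\<Union>c\<in>ch C n. INs C (\<sigma> c)) = scope C n"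
      proof -
        have "ivar C ` (\<Union>c\<in>ch C n. INs C (\<sigma> c)) = (\<Union>c\<in>ch C n. ivar C ` INs C (\<sigma> c))"
          by (rule image_UN)
        also have "\<dots> = (\<Union>c\<in>ch C n. scope C c)" using img by simp
        also have "\<dots> = scope C n" using scope_unfold[OF 1(2)] ProdN by simp
        finally show ?thesis .
      qed
      ultimately show "inj_on (ivar C) (INs C T) \<and> ivar C ` INs C T = scope C n" using e by simp
    qed
  qed
qed

end


context pcw begin

lemma tree_sum_x:
  assumes T: "T \<in> trees_at C (root C)"
  shows "(\<Sum>x\<in>PiE Vars Dom. \<Prod>m\<in>INs C T. ifun C m (x (ivar C m))) = 1"
proof -
  have tv: "inj_on (ivar C) (INs C T)" "ivar C ` INs C T = Vars"
    using tree_vars[OF root_in] T scope_root by auto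
  have bij: "bij_betw (ivar C) (INs C T) Vars" using tv by (simp add: bij_betw_def)
  define g where "g = the_inv_into (INs C T) (ivar C)"
  have g1: "\<And>m. m \<in> INs C T \<Longrightarrow> g (ivar C m) = m" unfolding g_def using the_inv_into_f_f[OF tv(1)] .
  have g2: "\<And>v. v \<in> Vars \<Longrightarrow> g v \<in> INs C T" unfolding g_def using the_inv_into_into[OF tv(1)] tv(2) by blast
  have g3: "\<And>v. v \<in> Vars \<Longrightarrow> ivar C (g v) = v" unfolding g_def using f_the_inv_into_f[OF tv(1)] tv(2) by blast
  have re: "(\<Prod>m\<in>INs C T. ifun C m (x (ivar C m))) = (\<Prod>v\<in>Vars. ifun C (g v) (x v))" for x
  proof -
    have "(\<Prod>m\<in>INs C T. ifun C m (x (ivar C m))) = (\<Prod>m\<in>INs C T. ifun C (g (ivar C m)) (x (ivar C m)))"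
      by (rule prod.cong) (simp_all add: g1)
    also have "\<dots> = (\<Prod>v\<in>Vars. ifun C (g v) (x v))"
      by (rule prod.reindex_bij_betw[OF bij])
    finally show ?thesis .
  qed
  have "(\<Sum>x\<in>PiE Vars Dom. \<Prod>m\<in>INs C T. ifun C m (x (ivar C m))) = (\<Sum>x\<in>PiE Vars Dom. \<Prod>v\<in>Vars. ifun C (g v) (x v))"
    using re by simp
  also have "\<dots> = (\<Prod>v\<in>Vars. \<Sum>d\<in>Dom v. ifun C (g v) d)"
    by (rule prod_sum_PiE[OF fin_Vars fin_Dom, symmetric])
  also have "\<dots> = (\<Prod>v\<in>Vars. (1::real))"
  proof (rule prod.cong[OF refl])
    fix v assume v: "v \<in> Vars"
    have gi: "g v \<in> INs C T" using g2[OF v] .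
    then have "g v \<in> fst T" "kind C (g v) = InputN" by (simp_all add: INs_def)
    moreover have "fst T \<subseteq> nodes C" using tD1[OF T] .
    ultimately have "(\<Sum>d\<in>Dom (ivar C (g v)). ifun C (g v) d) = 1" using input_prop by blast
    then show "(\<Sum>d\<in>Dom v. ifun C (g v) d) = 1" using g3[OF v] by simp
  qed
  finally show ?thesis by simp
qed

lemma ptilde_expand: "ptilde C \<psi> x = (\<Sum>T\<in>induced_trees C. joint_tilde C \<psi> x T)"
  unfolding ptilde_def ptilde_node_cval induced_trees_at joint_tilde_tw
  using tree_expand[OF root_in] by simp

lemma Z_expand: "n \<in> nodes C \<Longrightarrow> Z_node C \<psi> n = (\<Sum>T\<in>trees_at C n. \<Prod>e\<in>ET C T. exp (\<psi> e))"
  unfolding Z_node_cval using tree_expand[of n \<psi> "\<lambda>_. 1"] by (simp add: tw_def)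

lemma tw_deriv:
  assumes fin: "finite (ET C T)"
  shows "((\<lambda>t. tw C (\<phi>(e := t)) h T) has_real_derivative (if e \<in> ET C T then tw C \<phi> h T else 0)) (at (\<phi> e))"
proof (cases "e \<in> ET C T")
  case True
  define K where "K = (\<Prod>e'\<in>ET C T - {e}. exp (\<phi> e')) * (\<Prod>n\<in>INs C T. h n)"
  have eq: "tw C (\<phi>(e := t)) h T = exp t * K" for t
  proof -
    define f where "f = (\<lambda>e'. exp ((\<phi>(e := t)) e'))"
    have "(\<Prod>e'\<in>ET C T. f e') = f e * (\<Prod>e'\<in>ET C T - {e}. f e')"
      by (rule prod.remove[OF fin True])
    also have "(\<Prod>e'\<in>ET C T - {e}. f e') = (\<Prod>e'\<in>ET C T - {e}. exp (\<phi> e'))"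
      by (rule prod.cong) (auto simp: f_def)
    also have "f e = exp t" by (simp add: f_def)
    finally have "(\<Prod>e'\<in>ET C T. f e') = exp t * (\<Prod>e'\<in>ET C T - {e}. exp (\<phi> e'))" .
    then show ?thesis unfolding tw_def K_def f_def by (simp add: mult.assoc)
  qed
  have "tw C \<phi> h T = exp (\<phi> e) * K" using eq[of "\<phi> e"] by simp
  moreover have "((\<lambda>t. exp t * K) has_real_derivative exp (\<phi> e) * K) (at (\<phi> e))"
    by (rule DERIV_cmult_right[OF DERIV_exp])
  ultimately show ?thesis using True eq by simp
next
  case False
  have eq: "tw C (\<phi>(e := t)) h T = tw C \<phi> h T" for t
  proof -
    have "(\<Prod>e'\<in>ET C T. exp ((\<phi>(e := t)) e')) = (\<Prod>e'\<in>ET C T. exp (\<phi> e'))"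
      by (rule prod.cong) (use False in auto)
    then show ?thesis unfolding tw_def by simp
  qed
  show ?thesis using False eq by simp
qed

lemma tree_ET_fin: "T \<in> trees_at C r \<Longrightarrow> finite (ET C T)"
  using tree_fin_edges by (simp add: ET_def)

lemma tree_ET_sub: "T \<in> trees_at C r \<Longrightarrow> ET C T \<subseteq> sum_edges C"
  using tD2 by (fastforce simp: ET_def sum_edges_def)

end


definition dZ :: "('n, 'v, 'd) pc \<Rightarrow> ('n \<times> 'n \<Rightarrow> real) \<Rightarrow> 'n \<times> 'n \<Rightarrow> 'n \<Rightarrow> real" where
  "dZ C \<phi> e m = (\<Sum>T\<in>trees_at C m. if e \<in> ET C T then tw C \<phi> (\<lambda>_. 1) T else 0)"

context pcw begin

lemma Z_as_tw: "m \<in> nodes C \<Longrightarrow> Z_node C \<psi> m = (\<Sum>T\<in>trees_at C m. tw C \<psi> (\<lambda>_. 1) T)"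
  unfolding Z_node_cval using tree_expand by simp

lemma Z_deriv: "m \<in> nodes C \<Longrightarrow> ((\<lambda>t. Z_node C (\<phi>(e := t)) m) has_real_derivative dZ C \<phi> e m) (at (\<phi> e))"
proof -
  assume m: "m \<in> nodes C"
  have "((\<lambda>t. \<Sum>T\<in>trees_at C m. tw C (\<phi>(e := t)) (\<lambda>_. 1) T) has_real_derivative dZ C \<phi> e m) (at (\<phi> e))"
    unfolding dZ_def by (rule DERIV_sum) (rule tw_deriv[OF tree_ET_fin])
  then show ?thesis using Z_as_tw[OF m] by simp
qed

lemma sum_edge_D: "e \<in> sum_edges C \<Longrightarrow> fst e \<in> nodes C \<and> kind C (fst e) = SumN \<and> snd e \<in> ch C (fst e)"
  by (auto simp: sum_edges_def)

lemma dZ_rec: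
  assumes norm: "normalized C \<phi>" and e: "e \<in> sum_edges C" and m: "m \<in> nodes C"
  shows "dZ C \<phi> e m = (\<Sum>c\<in>ch C m. (if kind C m = SumN then exp (\<phi> (m, c)) else 1) * dZ C \<phi> e c)
     + (if m = fst e then exp (\<phi> e) else 0)"
proof -
  note E = sum_edge_D[OF e]
  have chn: "\<And>c. c \<in> ch C m \<Longrightarrow> c \<in> nodes C" using ch_sub m by blast
  have Z1: "\<And>c. c \<in> ch C m \<Longrightarrow> Z_node C \<phi> c = 1" using Z_one[OF norm] chn by blast
  have finK: "finite (ch C m)" using fin_ch m by blast
  have D: "((\<lambda>t. Z_node C (\<phi>(e := t)) m) has_real_derivative dZ C \<phi> e m) (at (\<phi> e))"
    by (rule Z_deriv[OF m])
  have upd: "\<phi>(e := \<phi> e) = \<phi>" by simp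
  show ?thesis
  proof (cases "kind C m")
    case InputN
    have "\<And>t. Z_node C (\<phi>(e := t)) m = 1" using m InputN by (simp add: Z_node_cval cval_rec)
    then have "((\<lambda>t. Z_node C (\<phi>(e := t)) m) has_real_derivative 0) (at (\<phi> e))" by simp
    then have "dZ C \<phi> e m = 0" by (rule DERIV_unique[OF D])
    moreover have "ch C m = {}" using input_iff m InputN by blast
    moreover have "m \<noteq> fst e" using E InputN by auto
    ultimately show ?thesis by simp
  next
    case SumN
    define Dx where "Dx = (\<lambda>c. if (m, c) = e then exp (\<phi> e) else 0)"
    have dx: "((\<lambda>t. exp ((\<phi>(e := t)) (m, c))) has_real_derivative Dx c) (at (\<phi> e))" for c
    proof (cases "(m, c) = e")
      case True
      then have "(\<lambda>t. exp ((\<phi>(e := t)) (m, c))) = exp" by auto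
      then show ?thesis using True DERIV_exp[of "\<phi> e"] by (simp add: Dx_def)
    next
      case False
      then show ?thesis by (simp add: Dx_def)
    qed
    have eqf: "(\<lambda>t. Z_node C (\<phi>(e := t)) m) = (\<lambda>t. \<Sum>c\<in>ch C m. exp ((\<phi>(e := t)) (m, c)) * Z_node C (\<phi>(e := t)) c)"
      using m SumN by (simp add: Z_node_cval cval_rec)
    have "((\<lambda>t. \<Sum>c\<in>ch C m. exp ((\<phi>(e := t)) (m, c)) * Z_node C (\<phi>(e := t)) c) has_real_derivative
        (\<Sum>c\<in>ch C m. Dx c * Z_node C (\<phi>(e := \<phi> e)) c + dZ C \<phi> e c * exp ((\<phi>(e := \<phi> e)) (m, c)))) (at (\<phi> e))"
    proof (rule DERIV_sum)
      fix c assume c: "c \<in> ch C m"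
      show "((\<lambda>t. exp ((\<phi>(e := t)) (m, c)) * Z_node C (\<phi>(e := t)) c) has_real_derivative
        Dx c * Z_node C (\<phi>(e := \<phi> e)) c + dZ C \<phi> e c * exp ((\<phi>(e := \<phi> e)) (m, c))) (at (\<phi> e))"
        by (rule DERIV_mult[OF dx[of c] Z_deriv[where \<phi>=\<phi> and e=e, OF chn[OF c]]])
    qed
    then have "((\<lambda>t. Z_node C (\<phi>(e := t)) m) has_real_derivative
        (\<Sum>c\<in>ch C m. Dx c * Z_node C (\<phi>(e := \<phi> e)) c + dZ C \<phi> e c * exp ((\<phi>(e := \<phi> e)) (m, c)))) (at (\<phi> e))"
      by (subst eqf)
    then have "dZ C \<phi> e m = (\<Sum>c\<in>ch C m. Dx c * Z_node C (\<phi>(e := \<phi> e)) c + dZ C \<phi> e c * exp ((\<phi>(e := \<phi> e)) (m, c)))"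
      by (rule DERIV_unique[OF D])
    also have "\<dots> = (\<Sum>c\<in>ch C m. Dx c + exp (\<phi> (m, c)) * dZ C \<phi> e c)"
      by (rule sum.cong) (simp_all add: upd Z1)
    also have "\<dots> = (\<Sum>c\<in>ch C m. exp (\<phi> (m, c)) * dZ C \<phi> e c) + (\<Sum>c\<in>ch C m. Dx c)"
      by (simp add: sum.distrib)
    also have "(\<Sum>c\<in>ch C m. Dx c) = (if m = fst e then exp (\<phi> e) else 0)"
    proof (cases "m = fst e")
      case True
      have "(\<Sum>c\<in>ch C m. Dx c) = (\<Sum>c\<in>ch C m. if c = snd e then exp (\<phi> e) else 0)"
        by (rule sum.cong) (auto simp: Dx_def True prod_eq_iff)
      also have "\<dots> = exp (\<phi> e)" using finK E True by simp
      finally show ?thesis using True by simp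
    next
      case False
      have "(\<Sum>c\<in>ch C m. Dx c) = 0"
        by (rule sum.neutral) (use False in \<open>auto simp: Dx_def\<close>)
      then show ?thesis using False by simp
    qed
    finally show ?thesis using SumN by simp
  next
    case ProdN
    have eqf: "(\<lambda>t. Z_node C (\<phi>(e := t)) m) = (\<lambda>t. \<Prod>c\<in>ch C m. Z_node C (\<phi>(e := t)) c)"
      using m ProdN by (simp add: Z_node_cval cval_rec)
    have "((\<lambda>t. \<Prod>c\<in>ch C m. Z_node C (\<phi>(e := t)) c) has_real_derivative
        (\<Sum>c\<in>ch C m. dZ C \<phi> e c * (\<Prod>c'\<in>ch C m - {c}. Z_node C (\<phi>(e := \<phi> e)) c'))) (at (\<phi> e))"
      by (rule has_field_derivative_prod) (rule Z_deriv[OF chn])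
    then have "((\<lambda>t. Z_node C (\<phi>(e := t)) m) has_real_derivative
        (\<Sum>c\<in>ch C m. dZ C \<phi> e c * (\<Prod>c'\<in>ch C m - {c}. Z_node C (\<phi>(e := \<phi> e)) c'))) (at (\<phi> e))"
      by (subst eqf)
    then have "dZ C \<phi> e m = (\<Sum>c\<in>ch C m. dZ C \<phi> e c * (\<Prod>c'\<in>ch C m - {c}. Z_node C (\<phi>(e := \<phi> e)) c'))"
      by (rule DERIV_unique[OF D])
    also have "\<dots> = (\<Sum>c\<in>ch C m. dZ C \<phi> e c)"
    proof (rule sum.cong[OF refl])
      fix c assume "c \<in> ch C m"
      have "(\<Prod>c'\<in>ch C m - {c}. Z_node C (\<phi>(e := \<phi> e)) c') = 1"
        by (rule prod.neutral) (simp add: upd Z1)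
      then show "dZ C \<phi> e c * (\<Prod>c'\<in>ch C m - {c}. Z_node C (\<phi>(e := \<phi> e)) c') = dZ C \<phi> e c" by simp
    qed
    moreover have "m \<noteq> fst e" using E ProdN by auto
    ultimately show ?thesis using ProdN by simp
  qed
qed

lemma dZ_root:
  assumes norm: "normalized C \<phi>" and e: "e \<in> sum_edges C"
  shows "dZ C \<phi> e (root C) = TD C \<phi> (fst e) * exp (\<phi> e)"
proof -
  note E = sum_edge_D[OF e]
  define a where "a = (\<lambda>u c. if kind C u = SumN then exp (\<phi> (u, c)) else (1::real))"
  define b where "b = (\<lambda>u. if u = fst e then exp (\<phi> e) else (0::real))"
  define d where "d = dZ C \<phi> e"
  define t where "t = TD C \<phi>"
  let ?N = "nodes C"
  have rec: "\<And>u. u \<in> ?N \<Longrightarrow> d u = (\<Sum>c\<in>ch C u. a u c * d c) + b u"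
    unfolding a_def b_def d_def using dZ_rec[OF norm e] by blast
  have S1: "(\<Sum>u\<in>?N. t u * d u) = (\<Sum>u\<in>?N. \<Sum>c\<in>ch C u. t u * a u c * d c) + (\<Sum>u\<in>?N. t u * b u)"
  proof -
    have "(\<Sum>u\<in>?N. t u * d u) = (\<Sum>u\<in>?N. (\<Sum>c\<in>ch C u. t u * a u c * d c) + t u * b u)"
      by (rule sum.cong[OF refl]) (simp add: rec distrib_left sum_distrib_left mult.assoc)
    then show ?thesis by (simp add: sum.distrib)
  qed
  have S2: "(\<Sum>u\<in>?N. t u * b u) = t (fst e) * exp (\<phi> e)"
  proof -
    have "(\<Sum>u\<in>?N. t u * b u) = (\<Sum>u\<in>?N. if u = fst e then t u * exp (\<phi> e) else 0)"
      by (rule sum.cong) (simp_all add: b_def)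
    also have "\<dots> = t (fst e) * exp (\<phi> e)" using fin_nodes E by simp
    finally show ?thesis .
  qed
  have chset: "\<And>u. u \<in> ?N \<Longrightarrow> ch C u = {c. c \<in> ?N \<and> c \<in> ch C u}" using ch_sub by blast
  have S3: "(\<Sum>u\<in>?N. \<Sum>c\<in>ch C u. t u * a u c * d c) = (\<Sum>c\<in>?N. \<Sum>u\<in>parents C c. t u * a u c * d c)"
  proof -
    have "(\<Sum>u\<in>?N. \<Sum>c\<in>ch C u. t u * a u c * d c) = (\<Sum>u\<in>?N. \<Sum>c\<in>{c. c \<in> ?N \<and> c \<in> ch C u}. t u * a u c * d c)"
      by (rule sum.cong[OF refl]) (simp add: chset[symmetric])
    also have "\<dots> = (\<Sum>c\<in>?N. \<Sum>u\<in>{u. u \<in> ?N \<and> c \<in> ch C u}. t u * a u c * d c)"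
      by (rule sum.swap_restrict[OF fin_nodes fin_nodes])
    also have "\<dots> = (\<Sum>c\<in>?N. \<Sum>u\<in>parents C c. t u * a u c * d c)"
      by (simp add: parents_def)
    finally show ?thesis .
  qed
  have S4: "(\<Sum>u\<in>parents C c. t u * a u c * d c) = (if c = root C then 0 else t c * d c)" if c: "c \<in> ?N" for c
  proof (cases "c = root C")
    case True
    then have "parents C c = {}" using parents_iff c by blast
    then show ?thesis using True by simp
  next
    case False
    have finP: "finite (parents C c)" using fin_nodes by (simp add: parents_def)
    have par: "\<And>u. u \<in> parents C c \<Longrightarrow> u \<in> ?N \<and> c \<in> ch C u \<and> kind C u \<noteq> InputN"
      using input_iff by (auto simp: parents_def)
    show ?thesis
    proof (cases "kind C c")
      case InputN
      have "ch C c = {}" using input_iff c InputN by blast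
      moreover have "c \<noteq> fst e" using E InputN by auto
      ultimately have "d c = 0" using rec[OF c] by (simp add: b_def)
      then show ?thesis by simp
    next
      case SumN
      have "\<And>u. u \<in> parents C c \<Longrightarrow> a u c = 1"
      proof -
        fix u assume u: "u \<in> parents C c"
        have "kind C u \<noteq> SumN" using sum_ch[of u c] par[OF u] SumN by auto
        then show "a u c = 1" by (simp add: a_def)
      qed
      then have "(\<Sum>u\<in>parents C c. t u * a u c * d c) = (\<Sum>u\<in>parents C c. t u) * d c"
        by (simp add: sum_distrib_right)
      also have "(\<Sum>u\<in>parents C c. t u) = t c" using TD_rec[OF c] False SumN by (simp add: t_def)
      finally show ?thesis using False by simp
    next
      case ProdN
      have "\<And>u. u \<in> parents C c \<Longrightarrow> a u c = exp (\<phi> (u, c))"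
      proof -
        fix u assume u: "u \<in> parents C c"
        have "kind C u \<noteq> ProdN" using prod_ch[of u c] par[OF u] ProdN by auto
        then have "kind C u = SumN" using par[OF u] by (cases "kind C u") auto
        then show "a u c = exp (\<phi> (u, c))" by (simp add: a_def)
      qed
      then have "(\<Sum>u\<in>parents C c. t u * a u c * d c) = (\<Sum>u\<in>parents C c. (exp (\<phi> (u, c)) * t u) * d c)"
        by (intro sum.cong[OF refl]) simp
      also have "\<dots> = (\<Sum>u\<in>parents C c. exp (\<phi> (u, c)) * t u) * d c"
        by (rule sum_distrib_right[symmetric])
      also have "(\<Sum>u\<in>parents C c. exp (\<phi> (u, c)) * t u) = t c" using TD_rec[OF c] False ProdN by (simp add: t_def)
      finally show ?thesis using False by simp
    qed
  qed
  have S5: "(\<Sum>c\<in>?N. if c = root C then 0 else t c * d c) = (\<Sum>u\<in>?N. t u * d u) - t (root C) * d (root C)"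
  proof -
    have "(\<Sum>u\<in>?N. t u * d u) = t (root C) * d (root C) + (\<Sum>u\<in>?N - {root C}. t u * d u)"
      by (rule sum.remove[OF fin_nodes root_in])
    moreover have "(\<Sum>c\<in>?N. if c = root C then 0 else t c * d c) = 0 + (\<Sum>u\<in>?N - {root C}. if u = root C then 0 else t u * d u)"
      by (subst sum.remove[OF fin_nodes root_in]) simp
    moreover have "(\<Sum>u\<in>?N - {root C}. if u = root C then 0 else t u * d u) = (\<Sum>u\<in>?N - {root C}. t u * d u)"
      by (rule sum.cong) auto
    ultimately show ?thesis by simp
  qed
  have "(\<Sum>u\<in>?N. t u * d u) = ((\<Sum>u\<in>?N. t u * d u) - t (root C) * d (root C)) + t (fst e) * exp (\<phi> e)"
    using S1 S2 S3 S4 S5 by (simp cong: sum.cong)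
  then have "t (root C) * d (root C) = t (fst e) * exp (\<phi> e)" by simp
  moreover have "t (root C) = 1" using TD_rec[OF root_in] by (simp add: t_def)
  ultimately show ?thesis by (simp add: d_def t_def)
qed

end


definition pdx :: "('n, 'v, 'd) pc \<Rightarrow> ('n \<times> 'n \<Rightarrow> real) \<Rightarrow> ('v \<Rightarrow> 'd) \<Rightarrow> 'n \<times> 'n \<Rightarrow> real" where
  "pdx C \<phi> x e = (\<Sum>T\<in>induced_trees C. if e \<in> ET C T then joint_tilde C \<phi> x T else 0)"

context pcw begin

lemma ptilde_deriv: "((\<lambda>t. ptilde C (\<phi>(e := t)) x) has_real_derivative pdx C \<phi> x e) (at (\<phi> e))"
proof -
  have "((\<lambda>t. \<Sum>T\<in>induced_trees C. tw C (\<phi>(e := t)) (\<lambda>n. ifun C n (x (ivar C n))) T) has_real_derivative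
     (\<Sum>T\<in>induced_trees C. if e \<in> ET C T then tw C \<phi> (\<lambda>n. ifun C n (x (ivar C n))) T else 0)) (at (\<phi> e))"
    by (rule DERIV_sum) (rule tw_deriv[OF tree_ET_fin], simp add: induced_trees_at)
  then show ?thesis unfolding pdx_def ptilde_expand joint_tilde_tw .
qed

lemma Zpc_deriv: "((\<lambda>t. Zpc C (\<phi>(e := t))) has_real_derivative dZ C \<phi> e (root C)) (at (\<phi> e))"
  unfolding Zpc_def by (rule Z_deriv[OF root_in])

lemma Zpc_one: "normalized C \<psi> \<Longrightarrow> Zpc C \<psi> = 1"
  unfolding Zpc_def by (rule Z_one[OF _ root_in])

lemma flow_term:
  assumes pos: "ptilde C \<phi> x > 0"
  shows "pderiv_at (\<lambda>\<psi>. ln (ptilde C \<psi> x)) \<phi> e = pdx C \<phi> x e / ptilde C \<phi> x"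
proof -
  have upd: "\<phi>(e := \<phi> e) = \<phi>" by simp
  have l: "DERIV ln (ptilde C (\<phi>(e := \<phi> e)) x) :> 1 / ptilde C (\<phi>(e := \<phi> e)) x"
    by (rule DERIV_ln_divide) (simp add: pos)
  have "((\<lambda>t. ln (ptilde C (\<phi>(e := t)) x)) has_real_derivative (1 / ptilde C (\<phi>(e := \<phi> e)) x) * pdx C \<phi> x e) (at (\<phi> e))"
    by (rule DERIV_chain2[OF l ptilde_deriv])
  then have "deriv (\<lambda>t. ln (ptilde C (\<phi>(e := t)) x)) (\<phi> e) = (1 / ptilde C (\<phi>(e := \<phi> e)) x) * pdx C \<phi> x e"
    by (rule DERIV_imp_deriv)
  then show ?thesis unfolding pderiv_at_def upd by simp
qed

lemma grad_term:
  assumes norm: "normalized C \<phi>" and pos: "ptilde C \<phi> x > 0"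
  shows "pderiv_at (\<lambda>\<psi>. ln (pc_prob C \<psi> x)) \<phi> e = pdx C \<phi> x e / ptilde C \<phi> x - dZ C \<phi> e (root C)"
proof -
  have upd: "\<phi>(e := \<phi> e) = \<phi>" by simp
  have Z1: "Zpc C \<phi> = 1" by (rule Zpc_one[OF norm])
  have Z1': "Zpc C (\<phi>(e := \<phi> e)) \<noteq> 0" using Z1 by simp
  have d3: "((\<lambda>t. ptilde C (\<phi>(e := t)) x / Zpc C (\<phi>(e := t))) has_real_derivative
      (pdx C \<phi> x e * Zpc C (\<phi>(e := \<phi> e)) - ptilde C (\<phi>(e := \<phi> e)) x * dZ C \<phi> e (root C)) /
      (Zpc C (\<phi>(e := \<phi> e)) * Zpc C (\<phi>(e := \<phi> e)))) (at (\<phi> e))"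
    by (rule DERIV_divide[OF ptilde_deriv[where \<phi>=\<phi> and e=e and x=x] Zpc_deriv[where \<phi>=\<phi> and e=e] Z1'])
  have l: "DERIV ln (ptilde C (\<phi>(e := \<phi> e)) x / Zpc C (\<phi>(e := \<phi> e))) :>
      1 / (ptilde C (\<phi>(e := \<phi> e)) x / Zpc C (\<phi>(e := \<phi> e)))"
    by (rule DERIV_ln_divide) (simp add: pos Z1)
  have "((\<lambda>t. ln (ptilde C (\<phi>(e := t)) x / Zpc C (\<phi>(e := t)))) has_real_derivative
      (1 / (ptilde C (\<phi>(e := \<phi> e)) x / Zpc C (\<phi>(e := \<phi> e)))) *
      ((pdx C \<phi> x e * Zpc C (\<phi>(e := \<phi> e)) - ptilde C (\<phi>(e := \<phi> e)) x * dZ C \<phi> e (root C)) /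
      (Zpc C (\<phi>(e := \<phi> e)) * Zpc C (\<phi>(e := \<phi> e))))) (at (\<phi> e))"
    by (rule DERIV_chain2[OF l d3])
  then have "deriv (\<lambda>t. ln (ptilde C (\<phi>(e := t)) x / Zpc C (\<phi>(e := t)))) (\<phi> e) =
      (1 / (ptilde C \<phi> x / 1)) * ((pdx C \<phi> x e * 1 - ptilde C \<phi> x * dZ C \<phi> e (root C)) / (1 * 1))"
    unfolding upd Z1 by (rule DERIV_imp_deriv)
  also have "\<dots> = pdx C \<phi> x e / ptilde C \<phi> x - dZ C \<phi> e (root C)"
    using pos by (simp add: field_simps)
  finally show ?thesis unfolding pderiv_at_def pc_prob_def .
qed

lemma pdx_nonneg:
  assumes x: "x \<in> PiE Vars Dom"
  shows "pdx C \<phi> x e \<ge> 0"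
  unfolding pdx_def
proof (rule sum_nonneg)
  fix T assume T: "T \<in> induced_trees C"
  have "(\<Prod>n\<in>{n \<in> fst T. kind C n = InputN}. ifun C n (x (ivar C n))) \<ge> 0"
  proof (rule prod_nonneg)
    fix n assume n: "n \<in> {n \<in> fst T. kind C n = InputN}"
    have nn: "n \<in> nodes C" using tD1[of T "root C"] T n by (auto simp: induced_trees_at)
    have ip: "ivar C n \<in> Vars" "\<forall>d\<in>Dom (ivar C n). 0 \<le> ifun C n d" using input_prop[OF nn] n by auto
    have "x (ivar C n) \<in> Dom (ivar C n)" using x ip(1) by (auto simp: PiE_iff)
    then show "0 \<le> ifun C n (x (ivar C n))" using ip(2) by blast
  qed
  moreover have "(\<Prod>e\<in>{e \<in> snd T. kind C (fst e) = SumN}. exp (\<phi> e)) \<ge> 0" by (rule prod_nonneg) simp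
  ultimately have "joint_tilde C \<phi> x T \<ge> 0" unfolding joint_tilde_def by simp
  then show "0 \<le> (if e \<in> ET C T then joint_tilde C \<phi> x T else 0)" by simp
qed

definition Pe :: "('n \<times> 'n \<Rightarrow> real) \<Rightarrow> 'n set \<times> ('n \<times> 'n) set \<Rightarrow> real" where
  "Pe \<psi> T = (\<Prod>e\<in>ET C T. exp (\<psi> e))"
definition Fx :: "('v \<Rightarrow> 'd) \<Rightarrow> 'n set \<times> ('n \<times> 'n) set \<Rightarrow> real" where
  "Fx x T = (\<Prod>m\<in>INs C T. ifun C m (x (ivar C m)))"

lemma joint_split: "normalized C \<psi> \<Longrightarrow> joint C \<psi> x T = Pe \<psi> T * Fx x T"
  unfolding joint_def Zpc_one joint_tilde_tw tw_def Pe_def Fx_def by simp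

lemma KL_term:
  assumes normp: "normalized C \<phi>" and norm: "normalized C \<psi>" and T: "T \<in> induced_trees C"
  shows "joint C \<phi> x T * ln (joint C \<phi> x T / joint C \<psi> x T) =
     joint C \<phi> x T * (\<Sum>e\<in>ET C T. \<phi> e) - (\<Sum>e\<in>sum_edges C. (if e \<in> ET C T then joint C \<phi> x T else 0) * \<psi> e)"
proof -
  have T': "T \<in> trees_at C (root C)" using T by (simp add: induced_trees_at)
  have fin: "finite (ET C T)" by (rule tree_ET_fin[OF T'])
  have sub: "ET C T \<subseteq> sum_edges C" by (rule tree_ET_sub[OF T'])
  have finE: "finite (sum_edges C)"
  proof -
    have "sum_edges C \<subseteq> dag_rel C" by (auto simp: sum_edges_def)
    then show ?thesis using fin_dag finite_subset by blast
  qed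
  have r: "(\<Sum>e\<in>sum_edges C. (if e \<in> ET C T then joint C \<phi> x T else 0) * \<psi> e) = joint C \<phi> x T * (\<Sum>e\<in>ET C T. \<psi> e)"
  proof -
    have "(\<Sum>e\<in>sum_edges C. (if e \<in> ET C T then joint C \<phi> x T else 0) * \<psi> e) =
        joint C \<phi> x T * (\<Sum>e\<in>sum_edges C. if e \<in> ET C T then \<psi> e else 0)"
      by (simp add: sum_distrib_left if_distrib if_distribR cong: if_cong)
    also have "(\<Sum>e\<in>sum_edges C. if e \<in> ET C T then \<psi> e else 0) = (\<Sum>e\<in>sum_edges C \<inter> ET C T. \<psi> e)"
      by (rule sum.inter_restrict[OF finE, symmetric])
    also have "sum_edges C \<inter> ET C T = ET C T" using sub by blast
    finally show ?thesis .
  qed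
  have Pp: "Pe \<phi> T = exp (\<Sum>e\<in>ET C T. \<phi> e)" "Pe \<psi> T = exp (\<Sum>e\<in>ET C T. \<psi> e)"
    unfolding Pe_def by (simp_all add: exp_sum[OF fin])
  show ?thesis
  proof (cases "Fx x T = 0")
    case True
    then show ?thesis unfolding r using joint_split[OF normp] by simp
  next
    case False
    have "joint C \<phi> x T / joint C \<psi> x T = exp (\<Sum>e\<in>ET C T. \<phi> e) / exp (\<Sum>e\<in>ET C T. \<psi> e)"
      unfolding joint_split[OF normp] joint_split[OF norm] Pp using False by simp
    also have "\<dots> = exp ((\<Sum>e\<in>ET C T. \<phi> e) - (\<Sum>e\<in>ET C T. \<psi> e))" by (simp add: exp_diff)
    finally have L: "ln (joint C \<phi> x T / joint C \<psi> x T) = (\<Sum>e\<in>ET C T. \<phi> e) - (\<Sum>e\<in>ET C T. \<psi> e)" by simp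
    show ?thesis unfolding r L by (simp add: right_diff_distrib)
  qed
qed

lemma fin_E: "finite (sum_edges C)"
proof -
  have "sum_edges C \<subseteq> dag_rel C" by (auto simp: sum_edges_def)
  then show ?thesis using fin_dag finite_subset by blast
qed

lemma fin_X: "finite (PiE Vars Dom)"
  using fin_Vars fin_Dom by (simp add: finite_PiE)

lemma fin_Tr: "finite (induced_trees C)"
  using tree_fin by (simp add: induced_trees_at)

lemma KL_expand:
  assumes normp: "normalized C \<phi>" and norm: "normalized C \<psi>"
  shows "KL Vars Dom C \<phi> \<psi> =
    (\<Sum>x\<in>PiE Vars Dom. \<Sum>T\<in>induced_trees C. joint C \<phi> x T * (\<Sum>e\<in>ET C T. \<phi> e))
    - (\<Sum>e\<in>sum_edges C. (\<Sum>x\<in>PiE Vars Dom. \<Sum>T\<in>induced_trees C. if e \<in> ET C T then joint C \<phi> x T else 0) * \<psi> e)"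
proof -
  let ?X = "PiE Vars Dom" and ?Tr = "induced_trees C" and ?E = "sum_edges C"
  have "KL Vars Dom C \<phi> \<psi> = (\<Sum>x\<in>?X. \<Sum>T\<in>?Tr. joint C \<phi> x T * (\<Sum>e\<in>ET C T. \<phi> e)
      - (\<Sum>e\<in>?E. (if e \<in> ET C T then joint C \<phi> x T else 0) * \<psi> e))"
    unfolding KL_def by (intro sum.cong refl KL_term[OF normp norm])
  also have "\<dots> = (\<Sum>x\<in>?X. \<Sum>T\<in>?Tr. joint C \<phi> x T * (\<Sum>e\<in>ET C T. \<phi> e))
      - (\<Sum>x\<in>?X. \<Sum>T\<in>?Tr. \<Sum>e\<in>?E. (if e \<in> ET C T then joint C \<phi> x T else 0) * \<psi> e)"
    by (simp add: sum_subtractf)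
  also have "(\<Sum>x\<in>?X. \<Sum>T\<in>?Tr. \<Sum>e\<in>?E. (if e \<in> ET C T then joint C \<phi> x T else 0) * \<psi> e)
      = (\<Sum>e\<in>?E. (\<Sum>x\<in>?X. \<Sum>T\<in>?Tr. if e \<in> ET C T then joint C \<phi> x T else 0) * \<psi> e)"
  proof -
    have "(\<Sum>x\<in>?X. \<Sum>T\<in>?Tr. \<Sum>e\<in>?E. (if e \<in> ET C T then joint C \<phi> x T else 0) * \<psi> e)
        = (\<Sum>x\<in>?X. \<Sum>e\<in>?E. \<Sum>T\<in>?Tr. (if e \<in> ET C T then joint C \<phi> x T else 0) * \<psi> e)"
      by (rule sum.cong[OF refl]) (rule sum.swap)
    also have "\<dots> = (\<Sum>e\<in>?E. \<Sum>x\<in>?X. \<Sum>T\<in>?Tr. (if e \<in> ET C T then joint C \<phi> x T else 0) * \<psi> e)"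
      by (rule sum.swap)
    also have "\<dots> = (\<Sum>e\<in>?E. (\<Sum>x\<in>?X. \<Sum>T\<in>?Tr. if e \<in> ET C T then joint C \<phi> x T else 0) * \<psi> e)"
      by (simp add: sum_distrib_right)
    finally show ?thesis .
  qed
  finally show ?thesis .
qed

lemma cc_eq:
  assumes normp: "normalized C \<phi>"
  shows "(\<Sum>x\<in>PiE Vars Dom. \<Sum>T\<in>induced_trees C. if e \<in> ET C T then joint C \<phi> x T else 0) = dZ C \<phi> e (root C)"
proof -
  let ?X = "PiE Vars Dom" and ?Tr = "induced_trees C"
  have "(\<Sum>x\<in>?X. \<Sum>T\<in>?Tr. if e \<in> ET C T then joint C \<phi> x T else 0)
      = (\<Sum>T\<in>?Tr. \<Sum>x\<in>?X. if e \<in> ET C T then Pe \<phi> T * Fx x T else 0)"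
    unfolding joint_split[OF normp] by (rule sum.swap)
  also have "\<dots> = (\<Sum>T\<in>?Tr. if e \<in> ET C T then Pe \<phi> T * (\<Sum>x\<in>?X. Fx x T) else 0)"
    by (rule sum.cong[OF refl]) (simp add: sum_distrib_left)
  also have "\<dots> = (\<Sum>T\<in>?Tr. if e \<in> ET C T then Pe \<phi> T else 0)"
    by (rule sum.cong[OF refl]) (simp add: Fx_def tree_sum_x induced_trees_at)
  also have "\<dots> = dZ C \<phi> e (root C)"
    unfolding dZ_def induced_trees_at by (rule sum.cong[OF refl]) (simp add: Pe_def tw_def)
  finally show ?thesis .
qed

end


lemma msum_swap: "(\<Sum>x\<in>#M. \<Sum>e\<in>E. f x e) = (\<Sum>e\<in>E. \<Sum>x\<in>#M. f x e)"
  by (induction M) (simp_all add: sum.distrib)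

lemma msum_diff_const: "(\<Sum>x\<in>#M. f x - (c::real)) = (\<Sum>x\<in>#M. f x) - real (size M) * c"
  by (induction M) (simp_all add: algebra_simps)

lemma msum_cong: "(\<And>x. x \<in># M \<Longrightarrow> f x = g x) \<Longrightarrow> (\<Sum>x\<in>#M. f x) = (\<Sum>x\<in>#M. g x)"
  by (metis image_mset_cong)

lemma gibbs:
  fixes v p :: "'c \<Rightarrow> real"
  assumes fin: "finite K" and vpos: "\<And>c. c \<in> K \<Longrightarrow> v c > 0" and norm: "(\<Sum>c\<in>K. exp (p c)) = 1"
  shows "(\<Sum>c\<in>K. v c * p c) \<le> (\<Sum>c\<in>K. v c * ln (v c / (\<Sum>c'\<in>K. v c')))"
    and "(\<Sum>c\<in>K. v c * p c) = (\<Sum>c\<in>K. v c * ln (v c / (\<Sum>c'\<in>K. v c'))) \<Longrightarrow>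
         \<forall>c\<in>K. exp (p c) = v c / (\<Sum>c'\<in>K. v c')"
proof -
  define V where "V = (\<Sum>c'\<in>K. v c')"
  have Kne: "K \<noteq> {}" using norm by auto
  have Vpos: "V > 0" unfolding V_def using fin Kne vpos by (intro sum_pos) auto
  define y where "y c = exp (p c) * V / v c" for c
  have ypos: "y c > 0" if "c \<in> K" for c using vpos[OF that] Vpos by (simp add: y_def)
  define tm where "tm c = v c * (y c - 1 - ln (y c))" for c
  have tm_nn: "tm c \<ge> 0" if c: "c \<in> K" for c
  proof -
    have "ln (y c) \<le> y c - 1" by (rule ln_le_minus_one[OF ypos[OF c]])
    then show ?thesis unfolding tm_def using vpos[OF c] by simp
  qed
  have key: "tm c = V * exp (p c) - v c - (v c * p c - v c * ln (v c / V))" if c: "c \<in> K" for c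
  proof -
    have vc: "v c > 0" by (rule vpos[OF c])
    have l1: "ln (y c) = p c + ln V - ln (v c)"
      unfolding y_def using vc Vpos by (simp add: ln_div ln_mult)
    have l2: "ln (v c / V) = ln (v c) - ln V" using vc Vpos by (simp add: ln_div)
    have L: "ln (y c) = p c - ln (v c / V)" using l1 l2 by linarith
    have M: "v c * y c = V * exp (p c)" unfolding y_def using vc by simp
    have "tm c = v c * y c - v c - v c * ln (y c)" unfolding tm_def by (simp add: algebra_simps)
    also have "\<dots> = V * exp (p c) - v c - v c * (p c - ln (v c / V))" unfolding M L ..
    also have "\<dots> = V * exp (p c) - v c - (v c * p c - v c * ln (v c / V))" by (simp add: algebra_simps)
    finally show ?thesis .
  qed
  have sumtm: "(\<Sum>c\<in>K. tm c) = - ((\<Sum>c\<in>K. v c * p c) - (\<Sum>c\<in>K. v c * ln (v c / V)))"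
  proof -
    have "(\<Sum>c\<in>K. tm c) = (\<Sum>c\<in>K. V * exp (p c) - v c - (v c * p c - v c * ln (v c / V)))"
      by (rule sum.cong[OF refl]) (rule key)
    also have "\<dots> = V * (\<Sum>c\<in>K. exp (p c)) - V - ((\<Sum>c\<in>K. v c * p c) - (\<Sum>c\<in>K. v c * ln (v c / V)))"
      by (simp add: sum_subtractf sum_distrib_left V_def)
    finally show ?thesis using norm by simp
  qed
  have nn: "(\<Sum>c\<in>K. tm c) \<ge> 0" by (rule sum_nonneg) (rule tm_nn)
  show "(\<Sum>c\<in>K. v c * p c) \<le> (\<Sum>c\<in>K. v c * ln (v c / (\<Sum>c'\<in>K. v c')))"
    using nn sumtm unfolding V_def by linarith
  assume eq: "(\<Sum>c\<in>K. v c * p c) = (\<Sum>c\<in>K. v c * ln (v c / (\<Sum>c'\<in>K. v c')))"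
  then have "(\<Sum>c\<in>K. tm c) = 0" using sumtm unfolding V_def by simp
  then have all0: "\<forall>c\<in>K. tm c = 0" using sum_nonneg_eq_0_iff[OF fin] tm_nn by blast
  show "\<forall>c\<in>K. exp (p c) = v c / (\<Sum>c'\<in>K. v c')"
  proof
    fix c assume c: "c \<in> K"
    have "tm c = 0" using all0 c by blast
    then have "v c * (y c - 1 - ln (y c)) = 0" unfolding tm_def .
    then have "y c - 1 - ln (y c) = 0" using vpos[OF c] by simp
    then have "ln (y c) = y c - 1" by simp
    then have "y c = 1" by (rule ln_eq_minus_one[OF ypos[OF c]])
    then have "exp (p c) * V = v c" unfolding y_def using vpos[OF c] by (simp add: field_simps)
    then show "exp (p c) = v c / (\<Sum>c'\<in>K. v c')" using Vpos unfolding V_def[symmetric] by (simp add: field_simps)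
  qed
qed

context pcw begin

lemma ptilde_pos: "normalized C \<phi> \<Longrightarrow> pc_prob C \<phi> x > 0 \<Longrightarrow> ptilde C \<phi> x > 0"
  using Zpc_one by (simp add: pc_prob_def)

lemma flow_eq:
  assumes norm: "normalized C \<phi>" and pos: "\<forall>x\<in>#D. pc_prob C \<phi> x > 0"
  shows "flow C D \<phi> e = (1 / real (size D)) * (\<Sum>x\<in>#D. pdx C \<phi> x e / ptilde C \<phi> x)"
  unfolding flow_def
  by (rule arg_cong[where f="\<lambda>z. (1 / real (size D)) * z"], rule msum_cong)
     (rule flow_term, rule ptilde_pos[OF norm], use pos in blast)

lemma flow_nonneg:
  assumes norm: "normalized C \<phi>" and pos: "\<forall>x\<in>#D. pc_prob C \<phi> x > 0" and X: "\<forall>x\<in>#D. x \<in> PiE Vars Dom"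
  shows "flow C D \<phi> e \<ge> 0"
proof -
  have "(\<Sum>x\<in>#D. (0::real)) \<le> (\<Sum>x\<in>#D. pdx C \<phi> x e / ptilde C \<phi> x)"
  proof (rule sum_mset_mono)
    fix x assume x: "x \<in># D"
    have "pdx C \<phi> x e \<ge> 0" using pdx_nonneg X x by blast
    moreover have "ptilde C \<phi> x > 0" using ptilde_pos[OF norm] pos x by blast
    ultimately show "0 \<le> pdx C \<phi> x e / ptilde C \<phi> x" by simp
  qed
  then show ?thesis unfolding flow_eq[OF norm pos] by simp
qed

lemma obj_rep:
  assumes norm: "normalized C \<phi>" and Dne: "D \<noteq> {#}" and pos: "\<forall>x\<in>#D. pc_prob C \<phi> x > 0"
  shows "\<exists>B. \<forall>\<psi>. normalized C \<psi> \<longrightarrow> objective Vars Dom C D \<gamma> \<phi> \<psi> =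
     B + (\<Sum>e\<in>sum_edges C. (flow C D \<phi> e + (\<gamma> - 1) * (TD C \<phi> (fst e) * exp (\<phi> e))) * \<psi> e)"
proof -
  let ?E = "sum_edges C"
  define N where "N = real (size D)"
  have Npos: "N > 0" using Dne unfolding N_def by (simp add: nonempty_has_size)
  define g where "g x e = pderiv_at (\<lambda>\<psi>. ln (pc_prob C \<psi> x)) \<phi> e" for x e
  define G where "G e = (1 / N) * (\<Sum>x\<in>#D. g x e)" for e
  define cc where "cc e = (\<Sum>x\<in>PiE Vars Dom. \<Sum>T\<in>induced_trees C. if e \<in> ET C T then joint C \<phi> x T else 0)" for e
  define K1 where "K1 = (\<Sum>x\<in>PiE Vars Dom. \<Sum>T\<in>induced_trees C. joint C \<phi> x T * (\<Sum>e\<in>ET C T. \<phi> e))"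
  define A where "A = (1 / N) * (\<Sum>x\<in>#D. ln (pc_prob C \<phi> x))"
  define B where "B = A - (\<Sum>e\<in>?E. G e * \<phi> e) - \<gamma> * K1"
  have Geq: "G e = flow C D \<phi> e - dZ C \<phi> e (root C)" for e
  proof -
    have "(\<Sum>x\<in>#D. g x e) = (\<Sum>x\<in>#D. pdx C \<phi> x e / ptilde C \<phi> x - dZ C \<phi> e (root C))"
      unfolding g_def by (rule msum_cong) (rule grad_term[OF norm ptilde_pos[OF norm]], use pos in blast)
    also have "\<dots> = (\<Sum>x\<in>#D. pdx C \<phi> x e / ptilde C \<phi> x) - N * dZ C \<phi> e (root C)"
      unfolding N_def by (rule msum_diff_const)
    finally show ?thesis unfolding G_def flow_eq[OF norm pos] N_def[symmetric] using Npos
      by (simp add: field_simps)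
  qed
  have wE: "G e + \<gamma> * cc e = flow C D \<phi> e + (\<gamma> - 1) * (TD C \<phi> (fst e) * exp (\<phi> e))"
    if e: "e \<in> ?E" for e
    unfolding Geq cc_def cc_eq[OF norm] dZ_root[OF norm e] by (simp add: algebra_simps)
  show ?thesis
  proof (intro exI allI impI)
    fix \<psi> assume nps: "normalized C \<psi>"
    have part1: "(1 / N) * (\<Sum>x\<in>#D. ln (pc_prob C \<phi> x) + (\<Sum>e\<in>?E. g x e * (\<psi> e - \<phi> e)))
        = A + (\<Sum>e\<in>?E. G e * \<psi> e) - (\<Sum>e\<in>?E. G e * \<phi> e)"
    proof -
      have h1: "(\<Sum>x\<in>#D. ln (pc_prob C \<phi> x) + (\<Sum>e\<in>?E. g x e * (\<psi> e - \<phi> e)))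
          = (\<Sum>x\<in>#D. ln (pc_prob C \<phi> x)) + (\<Sum>e\<in>?E. (\<Sum>x\<in>#D. g x e) * (\<psi> e - \<phi> e))"
        by (simp only: sum_mset.distrib msum_swap sum_mset_distrib_right)
      have h2: "(1 / N) * (\<Sum>e\<in>?E. (\<Sum>x\<in>#D. g x e) * (\<psi> e - \<phi> e)) = (\<Sum>e\<in>?E. G e * (\<psi> e - \<phi> e))"
        unfolding sum_distrib_left G_def by (simp only: mult.assoc)
      have h3: "(\<Sum>e\<in>?E. G e * (\<psi> e - \<phi> e)) = (\<Sum>e\<in>?E. G e * \<psi> e) - (\<Sum>e\<in>?E. G e * \<phi> e)"
        by (simp only: right_diff_distrib sum_subtractf)
      show ?thesis unfolding h1 distrib_left h2 h3 A_def by simp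
    qed
    have part2: "KL Vars Dom C \<phi> \<psi> = K1 - (\<Sum>e\<in>?E. cc e * \<psi> e)"
      unfolding K1_def cc_def by (rule KL_expand[OF norm nps])
    have "objective Vars Dom C D \<gamma> \<phi> \<psi> = A + (\<Sum>e\<in>?E. G e * \<psi> e) - (\<Sum>e\<in>?E. G e * \<phi> e)
        - \<gamma> * (K1 - (\<Sum>e\<in>?E. cc e * \<psi> e))"
      unfolding objective_def part2 N_def[symmetric] g_def[symmetric] part1 ..
    also have "\<dots> = B + (\<Sum>e\<in>?E. (G e + \<gamma> * cc e) * \<psi> e)"
      unfolding B_def by (simp add: algebra_simps sum.distrib sum_distrib_left)
    also have "(\<Sum>e\<in>?E. (G e + \<gamma> * cc e) * \<psi> e) =
        (\<Sum>e\<in>?E. (flow C D \<phi> e + (\<gamma> - 1) * (TD C \<phi> (fst e) * exp (\<phi> e))) * \<psi> e)"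
      by (rule sum.cong[OF refl]) (simp add: wE)
    finally show "objective Vars Dom C D \<gamma> \<phi> \<psi> =
        B + (\<Sum>e\<in>?E. (flow C D \<phi> e + (\<gamma> - 1) * (TD C \<phi> (fst e) * exp (\<phi> e))) * \<psi> e)" .
  qed
qed

end


theorem mainTheorem5:
  fixes C :: "('n, 'v, 'd) pc" and Vars :: "'v set" and Dom :: "'v \<Rightarrow> 'd set"
    and D :: "('v \<Rightarrow> 'd) multiset" and \<phi> :: "'n \<times> 'n \<Rightarrow> real" and \<gamma> :: real
  assumes "wf_pc Vars Dom C" and "smooth C" and "decomposable C"
    and "normalized C \<phi>"
    and "D \<noteq> {#}" and "\<forall>x\<in>#D. x \<in> PiE Vars Dom"
    and "\<forall>x\<in>#D. pc_prob C \<phi> x > 0"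
    and "\<gamma> > 1"
  shows "let \<alpha> = 1 / (\<gamma> - 1);
             ismax = (\<lambda>\<phi>'. normalized C \<phi>' \<and>
               (\<forall>\<psi>. normalized C \<psi> \<longrightarrow> objective Vars Dom C D \<gamma> \<phi> \<psi> \<le> objective Vars Dom C D \<gamma> \<phi> \<phi>'))
         in (\<exists>\<phi>'. ismax \<phi>') \<and>
            (\<forall>\<phi>'. ismax \<phi>' \<longleftrightarrow>
               (\<forall>(n, c)\<in>sum_edges C. exp (\<phi>' (n, c)) =
                  (TD C \<phi> n * exp (\<phi> (n, c)) + \<alpha> * flow C D \<phi> (n, c)) /
                  (\<Sum>c'\<in>ch C n. TD C \<phi> n * exp (\<phi> (n, c')) + \<alpha> * flow C D \<phi> (n, c'))))"
proof -
  interpret P: pcw Vars Dom C by (rule pcw.intro) (rule assms)+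
  note norm = assms(4) and Dne = assms(5) and X = assms(6) and pos = assms(7) and g1 = assms(8)
  define \<alpha> where "\<alpha> = 1 / (\<gamma> - 1)"
  define SN where "SN = {n \<in> nodes C. kind C n = SumN}"
  define v where "v e = TD C \<phi> (fst e) * exp (\<phi> e) + \<alpha> * flow C D \<phi> e" for e
  define V where "V n = (\<Sum>c'\<in>ch C n. v (n, c'))" for n
  define S where "S \<psi> n = (\<Sum>c\<in>ch C n. v (n, c) * \<psi> (n, c))" for \<psi> :: "'n \<times> 'n \<Rightarrow> real" and n
  define M where "M n = (\<Sum>c\<in>ch C n. v (n, c) * ln (v (n, c) / V n))" for n
  define ismax where "ismax = (\<lambda>\<phi>'. normalized C \<phi>' \<and>
      (\<forall>\<psi>. normalized C \<psi> \<longrightarrow> objective Vars Dom C D \<gamma> \<phi> \<psi> \<le> objective Vars Dom C D \<gamma> \<phi> \<phi>'))"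
  define Opt where "Opt \<phi>' = (\<forall>(n, c)\<in>sum_edges C. exp (\<phi>' (n, c)) = v (n, c) / V n)" for \<phi>' :: "'n \<times> 'n \<Rightarrow> real"
  have gpos: "\<gamma> - 1 > 0" using g1 by simp
  have apos: "\<alpha> > 0" unfolding \<alpha>_def using gpos by simp
  have E_Sig: "sum_edges C = Sigma SN (ch C)" by (auto simp: sum_edges_def SN_def)
  have finSN: "finite SN" unfolding SN_def using P.fin_nodes by simp
  have SNn: "\<And>n. n \<in> SN \<Longrightarrow> n \<in> nodes C \<and> kind C n = SumN" unfolding SN_def by simp
  have finch: "\<And>n. n \<in> SN \<Longrightarrow> finite (ch C n)" using P.fin_ch SNn by blast
  have vpos: "v (n, c) > 0" if n: "n \<in> SN" and c: "c \<in> ch C n" for n c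
  proof -
    have "TD C \<phi> n > 0" using P.TD_pos SNn[OF n] by simp
    moreover have "flow C D \<phi> (n, c) \<ge> 0" by (rule P.flow_nonneg[OF norm pos X])
    ultimately show ?thesis unfolding v_def using apos by (simp add: add_pos_nonneg)
  qed
  have Vpos: "V n > 0" if n: "n \<in> SN" for n
  proof -
    have "kind C n \<noteq> InputN" using SNn[OF n] by simp
    then have "ch C n \<noteq> {}" using P.input_iff[of n] SNn[OF n] by blast
    then show ?thesis unfolding V_def using finch[OF n] vpos[OF n] by (intro sum_pos) auto
  qed
  obtain B where B: "\<forall>\<psi>. normalized C \<psi> \<longrightarrow> objective Vars Dom C D \<gamma> \<phi> \<psi> =
     B + (\<Sum>e\<in>sum_edges C. (flow C D \<phi> e + (\<gamma> - 1) * (TD C \<phi> (fst e) * exp (\<phi> e))) * \<psi> e)"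
    using P.obj_rep[OF norm Dne pos] by blast
  have coef: "flow C D \<phi> e + (\<gamma> - 1) * (TD C \<phi> (fst e) * exp (\<phi> e)) = (\<gamma> - 1) * v e" for e
    unfolding v_def \<alpha>_def using gpos by (simp add: field_simps)
  have objS: "objective Vars Dom C D \<gamma> \<phi> \<psi> = B + (\<gamma> - 1) * (\<Sum>n\<in>SN. S \<psi> n)" if np: "normalized C \<psi>" for \<psi>
  proof -
    have "objective Vars Dom C D \<gamma> \<phi> \<psi> = B + (\<Sum>e\<in>sum_edges C. (\<gamma> - 1) * v e * \<psi> e)"
      using B np coef by simp
    also have "(\<Sum>e\<in>sum_edges C. (\<gamma> - 1) * v e * \<psi> e) = (\<gamma> - 1) * (\<Sum>e\<in>Sigma SN (ch C). v e * \<psi> e)"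
      unfolding E_Sig by (simp add: sum_distrib_left mult.assoc)
    also have "(\<Sum>e\<in>Sigma SN (ch C). v e * \<psi> e) = (\<Sum>n\<in>SN. S \<psi> n)"
    proof -
      have "(\<Sum>n\<in>SN. S \<psi> n) = (\<Sum>(n, c)\<in>Sigma SN (ch C). v (n, c) * \<psi> (n, c))"
        unfolding S_def by (rule sum.Sigma[OF finSN]) (use finch in blast)
      also have "\<dots> = (\<Sum>e\<in>Sigma SN (ch C). v e * \<psi> e)"
        by (rule sum.cong) auto
      finally show ?thesis by simp
    qed
    finally show ?thesis .
  qed
  have normiff: "normalized C \<psi> \<longleftrightarrow> (\<forall>n\<in>SN. (\<Sum>c\<in>ch C n. exp (\<psi> (n, c))) = 1)" for \<psi> :: "'n \<times> 'n \<Rightarrow> real"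
    by (auto simp: normalized_def SN_def)
  have nsum: "(\<Sum>c\<in>ch C n. exp (\<psi> (n, c))) = 1" if np: "normalized C \<psi>" and n: "n \<in> SN" for \<psi> n
  proof -
    have "\<forall>n\<in>nodes C. kind C n = SumN \<longrightarrow> (\<Sum>c\<in>ch C n. exp (\<psi> (n, c))) = 1"
      using np unfolding normalized_def .
    then show ?thesis using SNn[OF n] by blast
  qed
  have SleM: "S \<psi> n \<le> M n" if np: "normalized C \<psi>" and n: "n \<in> SN" for \<psi> n
    unfolding S_def M_def V_def
    by (rule gibbs(1)[OF finch[OF n] vpos[OF n] nsum[OF np n]])
  have SeqM: "\<forall>c\<in>ch C n. exp (\<psi> (n, c)) = v (n, c) / V n"
    if np: "normalized C \<psi>" and n: "n \<in> SN" and eq: "S \<psi> n = M n" for \<psi> n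
    unfolding V_def
    by (rule gibbs(2)[OF finch[OF n] vpos[OF n] nsum[OF np n]]) (use eq in \<open>unfold S_def M_def V_def\<close>)
  have OptD: "exp (\<psi> (n, c)) = v (n, c) / V n" if "Opt \<psi>" "n \<in> SN" "c \<in> ch C n" for \<psi> n c
    using that unfolding Opt_def E_Sig by auto
  have OptI: "Opt \<psi>" if "\<And>n c. n \<in> SN \<Longrightarrow> c \<in> ch C n \<Longrightarrow> exp (\<psi> (n, c)) = v (n, c) / V n" for \<psi>
    using that unfolding Opt_def E_Sig by auto
  have OptS: "normalized C \<psi> \<and> (\<forall>n\<in>SN. S \<psi> n = M n)" if op: "Opt \<psi>" for \<psi>
  proof -
    have lnv: "\<psi> (n, c) = ln (v (n, c) / V n)" if n: "n \<in> SN" and c: "c \<in> ch C n" for n c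
    proof -
      have "exp (\<psi> (n, c)) = v (n, c) / V n" by (rule OptD[OF op n c])
      then have "ln (exp (\<psi> (n, c))) = ln (v (n, c) / V n)" by simp
      then show ?thesis by simp
    qed
    have "(\<Sum>c\<in>ch C n. exp (\<psi> (n, c))) = 1" if n: "n \<in> SN" for n
    proof -
      have "(\<Sum>c\<in>ch C n. exp (\<psi> (n, c))) = (\<Sum>c\<in>ch C n. v (n, c) / V n)"
        by (rule sum.cong[OF refl]) (rule OptD[OF op n])
      also have "\<dots> = V n / V n" by (simp only: sum_divide_distrib[symmetric] V_def)
      also have "\<dots> = 1" using Vpos[OF n] by simp
      finally show ?thesis .
    qed
    then have "normalized C \<psi>" using normiff by blast
    moreover have "\<forall>n\<in>SN. S \<psi> n = M n"
      unfolding S_def M_def using lnv by (auto intro!: sum.cong)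
    ultimately show ?thesis by blast
  qed
  define \<phi>s where "\<phi>s e = ln (v e / V (fst e))" for e
  have Opt_s: "Opt \<phi>s"
  proof (rule OptI)
    fix n c assume n: "n \<in> SN" and c: "c \<in> ch C n"
    have "v (n, c) / V n > 0" using vpos[OF n c] Vpos[OF n] by simp
    then show "exp (\<phi>s (n, c)) = v (n, c) / V n" unfolding \<phi>s_def by simp
  qed
  have Opt_max: "ismax \<psi>" if op: "Opt \<psi>" for \<psi>
  proof -
    note O = OptS[OF op]
    have "objective Vars Dom C D \<gamma> \<phi> \<psi>' \<le> objective Vars Dom C D \<gamma> \<phi> \<psi>" if np: "normalized C \<psi>'" for \<psi>'
    proof -
      have "(\<Sum>n\<in>SN. S \<psi>' n) \<le> (\<Sum>n\<in>SN. S \<psi> n)"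
        using O SleM[OF np] by (intro sum_mono) simp
      then have "(\<gamma> - 1) * (\<Sum>n\<in>SN. S \<psi>' n) \<le> (\<gamma> - 1) * (\<Sum>n\<in>SN. S \<psi> n)"
        using gpos by (intro mult_left_mono) simp_all
      then show ?thesis unfolding objS[OF np] objS[OF conjunct1[OF O]] by simp
    qed
    then show ?thesis unfolding ismax_def using O by blast
  qed
  have max_Opt: "Opt \<psi>" if im: "ismax \<psi>" for \<psi>
  proof -
    have np: "normalized C \<psi>" using im unfolding ismax_def by blast
    have "objective Vars Dom C D \<gamma> \<phi> \<phi>s \<le> objective Vars Dom C D \<gamma> \<phi> \<psi>"
      using im conjunct1[OF OptS[OF Opt_s]] unfolding ismax_def by blast
    then have "(\<gamma> - 1) * (\<Sum>n\<in>SN. S \<phi>s n) \<le> (\<gamma> - 1) * (\<Sum>n\<in>SN. S \<psi> n)"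
      unfolding objS[OF np] objS[OF conjunct1[OF OptS[OF Opt_s]]] by simp
    then have "(\<Sum>n\<in>SN. S \<phi>s n) \<le> (\<Sum>n\<in>SN. S \<psi> n)" using gpos by simp
    then have le: "(\<Sum>n\<in>SN. M n) \<le> (\<Sum>n\<in>SN. S \<psi> n)" using conjunct2[OF OptS[OF Opt_s]] by simp
    have "(\<Sum>n\<in>SN. M n - S \<psi> n) = 0"
    proof -
      have "(\<Sum>n\<in>SN. M n - S \<psi> n) \<ge> 0" using SleM[OF np] by (intro sum_nonneg) simp
      moreover have "(\<Sum>n\<in>SN. M n - S \<psi> n) \<le> 0" using le by (simp add: sum_subtractf)
      ultimately show ?thesis by simp
    qed
    moreover have "\<And>n. n \<in> SN \<Longrightarrow> 0 \<le> M n - S \<psi> n" using SleM[OF np] by simp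
    ultimately have "\<forall>n\<in>SN. M n - S \<psi> n = 0"
      using sum_nonneg_eq_0_iff[OF finSN, of "\<lambda>n. M n - S \<psi> n"] by blast
    then have eqs: "\<And>n. n \<in> SN \<Longrightarrow> S \<psi> n = M n" by simp
    show ?thesis
    proof (rule OptI)
      fix n c assume n: "n \<in> SN" and c: "c \<in> ch C n"
      show "exp (\<psi> (n, c)) = v (n, c) / V n" using SeqM[OF np n eqs[OF n]] c by blast
    qed
  qed
  have main: "(\<exists>\<phi>'. ismax \<phi>') \<and> (\<forall>\<phi>'. ismax \<phi>' \<longleftrightarrow> Opt \<phi>')"
    using Opt_max max_Opt Opt_s by blast
  show ?thesis
    unfolding Let_def
    using main unfolding ismax_def Opt_def v_def V_def \<alpha>_def fst_conv .
qed

end
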